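(* Assume $C$ satisfies (A1), (A2) and (A3). Then there exist $\Theta_1\ge1$ and $c>0$, depending only on $\kappa_1,\kappa_2,N_0,d,\alpha$, such that for all $\rho\ge1$, all $s>2r>\Theta_1\rho^{-1}$ and all $(t,x)\in[0,\infty)\times\rho^{-1}\mathbb Z^d$, $$\mathbb P^{(t,x)}\big(W^\rho_{\tau(Q^\rho(t,x,r);W^\rho)}\notin Q^\rho(t,x,s)\big)\le c\,\frac{r^\alpha}{s^\alpha}.$$
   Context: Fix $d\ge1$, $\alpha\in(0,2)$. $C:\mathbb Z^d\times\mathbb Z^d\to[0,\infty)$ with: (A1) $C(x,y)=C(y,x)$, $C(x,x)=0$. (A2) $C(x,y)\le\kappa_1|x-y|^{-d-\alpha}$ for $x\ne y$. (A3) There are $N_0\in\mathbb N,\kappa_2>0$ such that for $x\ne y$ in $\mathbb Z^d$ there are $z_0^{(x,y)}=x,\dots,z_l^{(x,y)}=y$, $l\le N_0$, with $C(z_i^{(x,y)},z_{i+1}^{(x,y)})\ge\kappa_2|x-y|^{-d-\alpha}$; and for every $(\zeta,\xi)$ at most $N_0$ pairs $(x,y)$ have $\zeta=z_k^{(x,y)},\xi=z_{k+1}^{(x,y)}$ for some $k$. $B^\rho(x,r)=\{y\in\rho^{-1}\mathbb Z^d:|x-y|<r\}$. $Y$ is the continuous-time Markov chain on $\mathbb Z^d$ jumping from $x$ to $y$ at rate $C(x,y)$; $Y^\rho_t=\rho^{-1}Y_{\rho^\alpha t}$. $W^\rho_t=(U_0+t,Y^\rho_t)$ is the space-time process. $\tilde\gamma>0$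 is a fixed constant with $\mathbb P^x(\tau(B^1(x,r);Y)<\tilde\gamma r^\alpha)\le\frac12$ for all $x\in\mathbb Z^d$, $r\ge1$; $Q^\rho(t,x,r)=[t,t+\tilde\gamma r^\alpha]\times B^\rho(x,r)$. $\tau(\Omega;Z)$ is the first exit time of $Z$ from $\Omega$. *)

theory Defs
  imports "HOL-Probability.Probability"
begin

text \<open>Points of Z^d are vectors int^'d; d = CARD('d). They are embedded into R^d by lat.\<close>

definition lat :: "int^'d \<Rightarrow> real^'d" where
  "lat z = (\<chi> i. real_of_int (z $ i))"

definition condA1 :: "(int^'d \<Rightarrow> int^'d \<Rightarrow> real) \<Rightarrow> bool" where
  "condA1 C \<longleftrightarrow> (\<forall>x y. 0 \<le> C x y \<and> C x y = C y x \<and> C x x = 0)"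

definition condA2 :: "real \<Rightarrow> real \<Rightarrow> (int^'d \<Rightarrow> int^'d \<Rightarrow> real) \<Rightarrow> bool" where
  "condA2 \<alpha> \<kappa>1 C \<longleftrightarrow>
     (\<forall>x y. x \<noteq> y \<longrightarrow> C x y \<le> \<kappa>1 * norm (lat x - lat y) powr (- (real CARD('d) + \<alpha>)))"

definition condA3 :: "real \<Rightarrow> nat \<Rightarrow> real \<Rightarrow> (int^'d \<Rightarrow> int^'d \<Rightarrow> real) \<Rightarrow> bool" where
  "condA3 \<alpha> N0 \<kappa>2 C \<longleftrightarrow>
     (\<exists>(path :: int^'d \<Rightarrow> int^'d \<Rightarrow> nat \<Rightarrow> int^'d) (len :: int^'d \<Rightarrow> int^'d \<Rightarrow> nat).
        (\<forall>x y. x \<noteq> y \<longrightarrow>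
            len x y \<le> N0 \<and> path x y 0 = x \<and> path x y (len x y) = y \<and>
            (\<forall>k < len x y. C (path x y k) (path x y (Suc k))
                 \<ge> \<kappa>2 * norm (lat x - lat y) powr (- (real CARD('d) + \<alpha>)))) \<and>
        (\<forall>\<zeta> \<xi>. finite {(x, y). x \<noteq> y \<and> (\<exists>k < len x y. path x y k = \<zeta> \<and> path x y (Suc k) = \<xi>)} \<and>
                card {(x, y). x \<noteq> y \<and> (\<exists>k < len x y. path x y k = \<zeta> \<and> path x y (Suc k) = \<xi>)} \<le> N0))"

definition rate :: "(int^'d \<Rightarrow> int^'d \<Rightarrow> real) \<Rightarrow> int^'d \<Rightarrow> real" where
  "rate C x = (\<Sum>\<^sub>\<infinity> y. C x y)"

definition jump_prob :: "(int^'d \<Rightarrow> int^'d \<Rightarrow> real) \<Rightarrow> int^'d \<Rightarrow> int^'d \<Rightarrow> real" where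
  "jump_prob C x y = C x y / rate C x"

text \<open>Jump chain / holding time characterisation (Norris) of the continuous-time Markov chain
  with jump rates C started at x0: J n is the state after the n-th jump, S n the holding time
  in J n.\<close>
definition is_ctmc :: "'w measure \<Rightarrow> (int^'d \<Rightarrow> int^'d \<Rightarrow> real) \<Rightarrow> int^'d
    \<Rightarrow> (nat \<Rightarrow> 'w \<Rightarrow> int^'d) \<Rightarrow> (nat \<Rightarrow> 'w \<Rightarrow> real) \<Rightarrow> bool" where
  "is_ctmc M C x0 J S \<longleftrightarrow> prob_space M \<and>
     (\<forall>n. J n \<in> M \<rightarrow>\<^sub>M count_space UNIV) \<and> (\<forall>n. S n \<in> borel_measurable M) \<and>
     (\<forall>n (xs :: nat \<Rightarrow> int^'d) (ts :: nat \<Rightarrow> real). (\<forall>i. 0 \<le> ts i) \<longrightarrow>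
        measure M {\<omega> \<in> space M. (\<forall>i\<le>n. J i \<omega> = xs i) \<and> (\<forall>i<n. ts i < S i \<omega>)}
        = (if xs 0 = x0 then 1 else 0) *
          (\<Prod>i<n. jump_prob C (xs i) (xs (Suc i)) * exp (- rate C (xs i) * ts i)))"

definition jtime :: "(nat \<Rightarrow> 'w \<Rightarrow> real) \<Rightarrow> nat \<Rightarrow> 'w \<Rightarrow> real" where
  "jtime S n \<omega> = (\<Sum>i<n. S i \<omega>)"

definition ctmc_pos :: "(nat \<Rightarrow> 'w \<Rightarrow> int^'d) \<Rightarrow> (nat \<Rightarrow> 'w \<Rightarrow> real) \<Rightarrow> real \<Rightarrow> 'w \<Rightarrow> int^'d" where
  "ctmc_pos J S t \<omega> = J (card {n. 0 < n \<and> jtime S n \<omega> \<le> t}) \<omega>"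

definition pos_rho :: "real \<Rightarrow> real \<Rightarrow> (nat \<Rightarrow> 'w \<Rightarrow> int^'d) \<Rightarrow> (nat \<Rightarrow> 'w \<Rightarrow> real)
    \<Rightarrow> real \<Rightarrow> 'w \<Rightarrow> real^'d" where
  "pos_rho \<rho> \<alpha> J S t \<omega> = (1 / \<rho>) *\<^sub>R lat (ctmc_pos J S (\<rho> powr \<alpha> * t) \<omega>)"

definition lball :: "real \<Rightarrow> real^'d \<Rightarrow> real \<Rightarrow> (real^'d) set" where
  "lball \<rho> x r = {y. (\<exists>z::int^'d. y = (1 / \<rho>) *\<^sub>R lat z) \<and> dist x y < r}"

definition Qbox :: "real \<Rightarrow> real \<Rightarrow> real \<Rightarrow> real \<Rightarrow> real^'d \<Rightarrow> real \<Rightarrow> (real \<times> (real^'d)) set" where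
  "Qbox \<gamma> \<alpha> \<rho> t x r = {t .. t + \<gamma> * r powr \<alpha>} \<times> lball \<rho> x r"

definition first_exit :: "'a set \<Rightarrow> (real \<Rightarrow> 'a) \<Rightarrow> real" where
  "first_exit A Z = Inf {u. 0 \<le> u \<and> Z u \<notin> A}"

end

theory Submission
  imports Defs
begin


lemma lat_comp: "lat v $ i = real_of_int (v $ i)" by (simp add: lat_def)

lemma lat_norm_ge: "\<bar>real_of_int (v$i)\<bar> \<le> norm (lat v)"
  using component_le_norm_cart[of "lat v" i] by (simp add: lat_comp)

lemma lat_ne0: assumes "v \<noteq> 0" shows "1 \<le> norm (lat v)"
proof -
  obtain i where "v $ i \<noteq> 0" using assms by (metis vec_eq_iff zero_index)
  then have "1 \<le> \<bar>real_of_int (v$i)\<bar>" by linarith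
  then show ?thesis using lat_norm_ge[of v i] by linarith
qed

lemma lat_diff: "lat x - lat y = lat (x - y)"
  by (simp add: lat_def vec_eq_iff)

lemma card_cube:
  fixes N :: int assumes N: "0 \<le> N"
  shows "finite {v::int^'d. \<forall>i. \<bar>v$i\<bar> \<le> N} \<and> card {v::int^'d. \<forall>i. \<bar>v$i\<bar> \<le> N} \<le> nat (2*N+1) ^ CARD('d)"
proof -
  let ?P = "Pi\<^sub>E (UNIV::'d set) (\<lambda>_. {-N..N})"
  have sub: "{v::int^'d. \<forall>i. \<bar>v$i\<bar> \<le> N} \<subseteq> vec_lambda ` ?P"
  proof
    fix v :: "int^'d" assume "v \<in> {v::int^'d. \<forall>i. \<bar>v$i\<bar> \<le> N}"
    then have "(\<lambda>i. v$i) \<in> ?P" by (auto simp: PiE_iff abs_le_iff minus_le_iff)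
    moreover have "v = vec_lambda (\<lambda>i. v$i)" by simp
    ultimately show "v \<in> vec_lambda ` ?P" by blast
  qed
  have fP: "finite ?P" by (intro finite_PiE) auto
  have cP: "card ?P = nat (2*N+1) ^ CARD('d)"
    by (subst card_PiE) (auto simp: prod_constant)
  show ?thesis
    using finite_subset[OF sub finite_imageI[OF fP]] card_mono[OF finite_imageI[OF fP] sub]
      card_image_le[OF fP, of vec_lambda] cP by auto
qed

lemma pow2_interval:
  fixes x :: real assumes "1 \<le> x"
  shows "\<exists>j::nat. 2^j \<le> x \<and> x < 2^(Suc j)"
proof -
  define k where "k = \<lfloor>log 2 x\<rfloor>"
  have "2 powr k \<le> x \<and> x < 2 powr (k + 1)"
    using floor_log_eq_powr_iff[of x 2 k] assms unfolding k_def by auto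
  moreover have "0 \<le> k" unfolding k_def using assms by simp
  ultimately have "2 powr (real (nat k)) \<le> x \<and> x < 2 powr (real (nat k) + 1)"
    by simp
  moreover have "(2::real) powr (real (nat k) + 1) = 2^(Suc (nat k))"
    by (simp add: powr_add powr_realpow)
  moreover have "(2::real) powr (real (nat k)) = 2^(nat k)"
    by (simp add: powr_realpow)
  ultimately show ?thesis by (intro exI[of _ "nat k"]) simp
qed

lemma lattice_tail:
  fixes \<alpha> R :: real
  assumes \<alpha>: "0 < \<alpha>" and R: "0 < R"
  shows "(\<integral>\<^sup>+ v. ennreal (norm (lat v) powr (-(real CARD('d) + \<alpha>)))
            \<partial>count_space {v::int^'d. v \<noteq> 0 \<and> R \<le> norm (lat v)})
         \<le> ennreal (5 ^ CARD('d) / (1 - 2 powr (-\<alpha>)) * R powr (-\<alpha>))"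
proof -
  define d where "d = CARD('d)"
  define R' where "R' = max R 1"
  define q :: real where "q = 2 powr (-\<alpha>)"
  have q0: "0 < q" unfolding q_def by simp
  have q1: "q < 1" unfolding q_def using \<alpha> by (intro powr_less_one) auto
  define X where "X j = 2^j * R'" for j :: nat
  have X0: "0 < X j" for j unfolding X_def R'_def by simp
  have X1: "1 \<le> X j" for j
  proof -
    have "1 \<le> (2::real)^j" by simp
    moreover have "1 \<le> R'" unfolding R'_def by simp
    ultimately have "1 * 1 \<le> (2::real)^j * R'" by (intro mult_mono) auto
    then show ?thesis unfolding X_def by simp
  qed
  define sh where "sh j = {v::int^'d. X j \<le> norm (lat v) \<and> norm (lat v) < X (Suc j)}" for j
  define f where "f v = ennreal (norm (lat v) powr (-(real CARD('d) + \<alpha>)))" for v :: "int^'d"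
  define Set where "Set = {v::int^'d. v \<noteq> 0 \<and> R \<le> norm (lat v)}"
  have step1: "f v * indicator Set v \<le> (\<Sum>j. f v * indicator (sh j) v)" for v
  proof (cases "v \<in> Set")
    case True
    then have n1: "R' \<le> norm (lat v)" unfolding Set_def R'_def using lat_ne0 by auto
    have R'0: "0 < R'" unfolding R'_def by simp
    obtain j :: nat where j: "2^j \<le> norm (lat v) / R'" "norm (lat v) / R' < 2^(Suc j)"
      using pow2_interval[of "norm (lat v) / R'"] n1 R'0 by auto
    have "v \<in> sh j" unfolding sh_def X_def using j R'0 by (auto simp: field_simps)
    then have "f v * indicator Set v = f v * indicator (sh j) v" using True by simp
    also have "\<dots> \<le> (\<Sum>j. f v * indicator (sh j) v)"
    proof -
      have "(\<Sum>i\<in>{j}. f v * indicator (sh i) v) \<le> (\<Sum>j. f v * indicator (sh j) v)"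
        by (rule sum_le_suminf) auto
      then show ?thesis by (simp only: sum.insert_remove finite.emptyI empty_Diff sum.empty add_0_right)
    qed
    finally show ?thesis .
  qed simp
  have step3: "(\<integral>\<^sup>+ v. f v * indicator (sh j) v \<partial>count_space UNIV) \<le> ennreal (5^d * R' powr (-\<alpha>) * q^j)" for j
  proof -
    define N where "N = \<lfloor>X (Suc j)\<rfloor>"
    have N0: "0 \<le> N" unfolding N_def using X1[of "Suc j"] by simp
    define cube where "cube = {v::int^'d. \<forall>i. \<bar>v$i\<bar> \<le> N}"
    have cc: "finite cube" "card cube \<le> nat (2*N+1) ^ d" using card_cube[OF N0] unfolding cube_def d_def by auto
    have shc: "sh j \<subseteq> cube"
    proof
      fix v assume "v \<in> sh j"
      then have "norm (lat v) < X (Suc j)" unfolding sh_def by simp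
      then have "\<bar>real_of_int (v$i)\<bar> < X (Suc j)" for i using lat_norm_ge[of v i] by linarith
      then have "\<bar>v$i\<bar> \<le> N" for i unfolding N_def by (metis of_int_abs le_floor_iff less_imp_le)
      then show "v \<in> cube" unfolding cube_def by simp
    qed
    define c where "c = X j powr (-(real CARD('d) + \<alpha>))"
    have "(\<integral>\<^sup>+ v. f v * indicator (sh j) v \<partial>count_space UNIV) \<le> (\<integral>\<^sup>+ v. ennreal c * indicator cube v \<partial>count_space UNIV)"
    proof (rule nn_integral_mono)
      fix v
      show "f v * indicator (sh j) v \<le> ennreal c * indicator cube v"
      proof (cases "v \<in> sh j")
        case True
        then have "X j \<le> norm (lat v)" unfolding sh_def by simp
        then have "norm (lat v) powr (-(real CARD('d) + \<alpha>)) \<le> c"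
          unfolding c_def using X0[of j] \<alpha> by (intro powr_mono2') auto
        then show ?thesis using True shc unfolding f_def by (auto simp: ennreal_leI)
      qed simp
    qed
    also have "\<dots> = ennreal c * of_nat (card cube)"
      using cc by (subst nn_integral_cmult_indicator) auto
    also have "\<dots> \<le> ennreal (c * (5 * X j) ^ d)"
    proof -
      have "real (card cube) \<le> real (nat (2*N+1) ^ d)" using cc by linarith
      also have "\<dots> = (2 * real_of_int N + 1) ^ d" using N0 by simp
      also have "\<dots> \<le> (5 * X j) ^ d"
      proof (rule power_mono)
        have "real_of_int N \<le> X (Suc j)" unfolding N_def by simp
        also have "\<dots> = 2 * X j" unfolding X_def by simp
        finally show "2 * real_of_int N + 1 \<le> 5 * X j" using X1[of j] by linarith
      qed (use N0 in simp)
      finally have "real (card cube) \<le> (5 * X j) ^ d" .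
      moreover have "0 \<le> c" unfolding c_def by simp
      ultimately have "c * real (card cube) \<le> c * (5 * X j) ^ d" by (rule mult_left_mono)
      then show ?thesis
        by (metis ennreal_leI ennreal_mult'' ennreal_of_nat_eq_real_of_nat of_nat_0_le_iff)
    qed
    also have "c * (5 * X j) ^ d = 5^d * R' powr (-\<alpha>) * q^j"
    proof -
      have "X j ^ d * c = X j powr (real d) * X j powr (-(real d + \<alpha>))"
        unfolding c_def d_def using X0[of j] by (simp add: powr_realpow)
      also have "\<dots> = X j powr (-\<alpha>)" by (simp add: powr_add[symmetric])
      also have "\<dots> = (2^j) powr (-\<alpha>) * R' powr (-\<alpha>)"
        unfolding X_def R'_def by (simp add: powr_mult)
      also have "((2::real)^j) powr (-\<alpha>) = q^j"
        unfolding q_def by (simp add: powr_realpow[symmetric] powr_powr mult.commute)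
      finally show ?thesis by (simp add: power_mult_distrib algebra_simps)
    qed
    finally show ?thesis .
  qed
  have "(\<integral>\<^sup>+ v. f v \<partial>count_space Set) = (\<integral>\<^sup>+ v. f v * indicator Set v \<partial>count_space UNIV)"
    by (rule nn_integral_count_space_indicator) simp
  also have "\<dots> \<le> (\<integral>\<^sup>+ v. (\<Sum>j. f v * indicator (sh j) v) \<partial>count_space UNIV)"
    by (rule nn_integral_mono) (rule step1)
  also have "\<dots> = (\<Sum>j. \<integral>\<^sup>+ v. f v * indicator (sh j) v \<partial>count_space UNIV)"
    by (rule nn_integral_suminf) auto
  also have "\<dots> \<le> (\<Sum>j. ennreal (5^d * R' powr (-\<alpha>) * q^j))"
    by (intro suminf_le summableI step3)
  also have "\<dots> = ennreal (5^d * R' powr (-\<alpha>) / (1 - q))"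
  proof (rule suminf_ennreal_eq)
    show "(\<lambda>j. 5^d * R' powr (-\<alpha>) * q^j) sums (5^d * R' powr (-\<alpha>) / (1 - q))"
      using sums_mult[OF geometric_sums[of q], of "5^d * R' powr (-\<alpha>)"] q0 q1 by (simp add: field_simps)
  qed (use q0 in simp)
  also have "\<dots> \<le> ennreal (5 ^ CARD('d) / (1 - 2 powr (-\<alpha>)) * R powr (-\<alpha>))"
  proof (rule ennreal_leI)
    have "R' powr (-\<alpha>) \<le> R powr (-\<alpha>)" unfolding R'_def using R \<alpha> by (intro powr_mono2') auto
    then have "5^d * R' powr (-\<alpha>) / (1 - q) \<le> 5^d * R powr (-\<alpha>) / (1 - q)"
      using q1 by (intro divide_right_mono mult_left_mono) auto
    then show "5^d * R' powr (-\<alpha>) / (1 - q) \<le> 5 ^ CARD('d) / (1 - 2 powr (-\<alpha>)) * R powr (-\<alpha>)"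
      unfolding q_def d_def by simp
  qed
  finally show ?thesis unfolding f_def Set_def .
qed


definition Kc :: "nat \<Rightarrow> real \<Rightarrow> real" where
  "Kc d \<alpha> = 5 ^ d / (1 - 2 powr (-\<alpha>))"

lemma Kc_pos: "0 < \<alpha> \<Longrightarrow> 0 < Kc d \<alpha>"
  unfolding Kc_def using powr_less_one[of 2 "-\<alpha>"] by auto

lemma lat_add: "lat (x + v) - lat x = lat v"
  by (simp add: lat_def vec_eq_iff)

lemma C_far:
  fixes C :: "int^'d \<Rightarrow> int^'d \<Rightarrow> real"
  assumes A1: "condA1 C" and A2: "condA2 \<alpha> \<kappa>1 C" and \<alpha>: "0 < \<alpha>" and k1: "0 < \<kappa>1" and R: "0 < R"
  shows "(\<integral>\<^sup>+ y. ennreal (C x y) \<partial>count_space {y. R \<le> norm (lat y - lat x)})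
           \<le> ennreal (\<kappa>1 * Kc CARD('d) \<alpha> * R powr (-\<alpha>))"
proof -
  let ?g = "\<lambda>v::int^'d. ennreal (\<kappa>1 * norm (lat v) powr (-(real CARD('d) + \<alpha>)))"
  have bij: "bij_betw (\<lambda>v. x + v) {v::int^'d. v \<noteq> 0 \<and> R \<le> norm (lat v)} {y. R \<le> norm (lat y - lat x)}"
  proof (rule bij_betwI[where g = "\<lambda>y. y - x"])
    show "(\<lambda>v. x + v) \<in> {v. v \<noteq> 0 \<and> R \<le> norm (lat v)} \<rightarrow> {y. R \<le> norm (lat y - lat x)}"
      by (auto simp: lat_add)
    show "(\<lambda>y. y - x) \<in> {y. R \<le> norm (lat y - lat x)} \<rightarrow> {v. v \<noteq> 0 \<and> R \<le> norm (lat v)}"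
    proof
      fix y assume y: "y \<in> {y. R \<le> norm (lat y - lat x)}"
      have "lat y - lat x = lat (y - x)" by (simp add: lat_diff)
      then have n: "R \<le> norm (lat (y - x))" using y by simp
      moreover have "y - x \<noteq> 0"
      proof
        assume "y - x = 0"
        moreover have "lat (0::int^'d) = 0" by (simp add: lat_def vec_eq_iff)
        ultimately show False using n R by simp
      qed
      ultimately show "y - x \<in> {v. v \<noteq> 0 \<and> R \<le> norm (lat v)}" by simp
    qed
  qed auto
  have "(\<integral>\<^sup>+ y. ennreal (C x y) \<partial>count_space {y. R \<le> norm (lat y - lat x)})
      \<le> (\<integral>\<^sup>+ y. ?g (y - x) \<partial>count_space {y. R \<le> norm (lat y - lat x)})"
  proof (rule nn_integral_mono)
    fix y assume "y \<in> space (count_space {y. R \<le> norm (lat y - lat x)})"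
    then have y: "R \<le> norm (lat y - lat x)" by simp
    then have "x \<noteq> y" using R by auto
    then have "C x y \<le> \<kappa>1 * norm (lat x - lat y) powr (- (real CARD('d) + \<alpha>))"
      using A2 unfolding condA2_def by blast
    also have "norm (lat x - lat y) = norm (lat (y - x))"
      by (simp add: lat_diff[symmetric] norm_minus_commute)
    finally show "ennreal (C x y) \<le> ?g (y - x)" by (rule ennreal_leI)
  qed
  also have "\<dots> = (\<integral>\<^sup>+ v. ?g (x + v - x) \<partial>count_space {v::int^'d. v \<noteq> 0 \<and> R \<le> norm (lat v)})"
    using nn_integral_bij_count_space[OF bij, of "\<lambda>y. ?g (y - x)"] by simp
  also have "\<dots> = ennreal \<kappa>1 * (\<integral>\<^sup>+ v. ennreal (norm (lat v) powr (-(real CARD('d) + \<alpha>))) \<partial>count_space {v::int^'d. v \<noteq> 0 \<and> R \<le> norm (lat v)})"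
    using k1 by (subst nn_integral_cmult[symmetric]) (auto simp: ennreal_mult)
  also have "\<dots> \<le> ennreal \<kappa>1 * ennreal (Kc CARD('d) \<alpha> * R powr (-\<alpha>))"
    using lattice_tail[OF \<alpha> R, where 'd='d] unfolding Kc_def by (intro mult_left_mono) auto
  also have "\<dots> = ennreal (\<kappa>1 * Kc CARD('d) \<alpha> * R powr (-\<alpha>))"
    using k1 by (simp add: ennreal_mult' mult.assoc)
  finally show ?thesis .
qed

lemma C_total:
  fixes C :: "int^'d \<Rightarrow> int^'d \<Rightarrow> real"
  assumes A1: "condA1 C" and A2: "condA2 \<alpha> \<kappa>1 C" and \<alpha>: "0 < \<alpha>" and k1: "0 < \<kappa>1"
  shows "(\<integral>\<^sup>+ y. ennreal (C x y) \<partial>count_space UNIV) \<le> ennreal (\<kappa>1 * Kc CARD('d) \<alpha>)"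
    and "ennreal (rate C x) = (\<integral>\<^sup>+ y. ennreal (C x y) \<partial>count_space UNIV)"
proof -
  have e: "(\<integral>\<^sup>+ y. ennreal (C x y) \<partial>count_space UNIV) = (\<integral>\<^sup>+ y. ennreal (C x y) \<partial>count_space {y. 1 \<le> norm (lat y - lat x)})"
  proof -
    have "(\<integral>\<^sup>+ y. ennreal (C x y) \<partial>count_space {y. 1 \<le> norm (lat y - lat x)})
        = (\<integral>\<^sup>+ y. ennreal (C x y) * indicator {y. 1 \<le> norm (lat y - lat x)} y \<partial>count_space UNIV)"
      by (rule nn_integral_count_space_indicator) simp
    also have "\<dots> = (\<integral>\<^sup>+ y. ennreal (C x y) \<partial>count_space UNIV)"
    proof (rule nn_integral_cong)
      fix y
      show "ennreal (C x y) * indicator {y. 1 \<le> norm (lat y - lat x)} y = ennreal (C x y)"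
      proof (cases "y = x")
        case True then show ?thesis using A1 unfolding condA1_def by simp
      next
        case False
        then have "y - x \<noteq> 0" by simp
        then have "1 \<le> norm (lat (y - x))" by (rule lat_ne0)
        then show ?thesis by (simp add: lat_diff)
      qed
    qed
    finally show ?thesis by simp
  qed
  show le: "(\<integral>\<^sup>+ y. ennreal (C x y) \<partial>count_space UNIV) \<le> ennreal (\<kappa>1 * Kc CARD('d) \<alpha>)"
    unfolding e using C_far[OF A1 A2 \<alpha> k1, of 1 x] by simp
  have fin: "(\<integral>\<^sup>+ y. ennreal (norm (C x y)) \<partial>count_space UNIV) < \<infinity>"
  proof -
    have "(\<integral>\<^sup>+ y. ennreal (norm (C x y)) \<partial>count_space UNIV) = (\<integral>\<^sup>+ y. ennreal (C x y) \<partial>count_space UNIV)"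
      using A1 unfolding condA1_def by simp
    then show ?thesis using le by (simp add: le_less_trans)
  qed
  have int: "integrable (count_space UNIV) (C x)"
    using fin by (subst integrable_iff_bounded) auto
  have sm: "Infinite_Set_Sum.abs_summable_on (C x) UNIV" unfolding abs_summable_on_def by (rule int)
  have "rate C x = infsetsum (C x) UNIV" unfolding rate_def by (rule infsetsum_infsum[OF sm, symmetric])
  also have "\<dots> = enn2real (\<integral>\<^sup>+ y. ennreal (C x y) \<partial>count_space UNIV)"
    by (rule infsetsum_conv_nn_integral) (use fin A1 in \<open>auto simp: condA1_def\<close>)
  finally have r: "rate C x = enn2real (\<integral>\<^sup>+ y. ennreal (C x y) \<partial>count_space UNIV)" .
  have "(\<integral>\<^sup>+ y. ennreal (C x y) \<partial>count_space UNIV) < \<top>"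
    using le ennreal_less_top le_less_trans by blast
  then show "ennreal (rate C x) = (\<integral>\<^sup>+ y. ennreal (C x y) \<partial>count_space UNIV)"
    unfolding r by (simp add: less_top)
qed


definition k2l :: "real \<Rightarrow> real \<Rightarrow> ('d::finite) itself \<Rightarrow> real" where
  "k2l \<kappa>2 \<alpha> _ = \<kappa>2 * norm (lat (- 1 :: int^'d)) powr (- (real CARD('d) + \<alpha>))"

lemma k2l_pos: "0 < \<kappa>2 \<Longrightarrow> 0 < k2l \<kappa>2 \<alpha> TYPE('d::finite)"
proof -
  assume k: "0 < \<kappa>2"
  have "(- 1 :: int^'d) \<noteq> 0" by (simp add: vec_eq_iff)
  then have "1 \<le> norm (lat (- 1 :: int^'d))" by (rule lat_ne0)
  then have "lat (- 1 :: int^'d) \<noteq> 0" by auto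
  then have "0 < norm (lat (- 1 :: int^'d)) powr (- (real CARD('d) + \<alpha>))" by simp
  then show ?thesis unfolding k2l_def using k by simp
qed

lemma C_lower:
  fixes C :: "int^'d \<Rightarrow> int^'d \<Rightarrow> real"
  assumes A1: "condA1 C" and A2: "condA2 \<alpha> \<kappa>1 C" and A3: "condA3 \<alpha> N0 \<kappa>2 C"
    and \<alpha>: "0 < \<alpha>" and k1: "0 < \<kappa>1"
  shows "k2l \<kappa>2 \<alpha> TYPE('d) \<le> rate C x"
proof -
  obtain path :: "int^'d \<Rightarrow> int^'d \<Rightarrow> nat \<Rightarrow> int^'d" and len where
    P: "\<And>x y. x \<noteq> y \<Longrightarrow> len x y \<le> N0 \<and> path x y 0 = x \<and> path x y (len x y) = y \<and>
            (\<forall>k < len x y. C (path x y k) (path x y (Suc k))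
                 \<ge> \<kappa>2 * norm (lat x - lat y) powr (- (real CARD('d) + \<alpha>)))"
    using A3 unfolding condA3_def by blast
  define y where "y = x + 1"
  have xy: "x \<noteq> y" unfolding y_def by (simp add: vec_eq_iff)
  have l0: "len x y \<noteq> 0"
  proof
    assume "len x y = 0"
    then have "path x y 0 = y" using P[OF xy] by metis
    then show False using P[OF xy] xy by metis
  qed
  have "C (path x y 0) (path x y (Suc 0)) \<ge> \<kappa>2 * norm (lat x - lat y) powr (- (real CARD('d) + \<alpha>))"
    using P[OF xy] l0 by auto
  moreover have "lat x - lat y = lat (- 1 :: int^'d)" unfolding y_def lat_diff by simp
  ultimately have c: "k2l \<kappa>2 \<alpha> TYPE('d) \<le> C x (path x y 1)" unfolding k2l_def using P[OF xy] by simp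
  define z where "z = path x y 1"
  have "ennreal (C x z) = (\<integral>\<^sup>+ w. ennreal (C x w) * indicator {z} w \<partial>count_space UNIV)"
    by (subst nn_integral_indicator_singleton) auto
  also have "\<dots> \<le> (\<integral>\<^sup>+ w. ennreal (C x w) \<partial>count_space UNIV)"
    by (intro nn_integral_mono) (auto split: split_indicator)
  also have "\<dots> = ennreal (rate C x)" using C_total(2)[OF A1 A2 \<alpha> k1] by simp
  moreover have "0 \<le> rate C x" unfolding rate_def using A1 by (simp add: infsum_nonneg condA1_def)
  moreover have "0 \<le> C x z" using A1 by (simp add: condA1_def)
  ultimately have "C x z \<le> rate C x" by (auto simp: ennreal_le_iff2)
  then show ?thesis using c unfolding z_def by simp
qed


lemma jp_facts:
  fixes C :: "int^'d \<Rightarrow> int^'d \<Rightarrow> real"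
  assumes A1: "condA1 C" and A2: "condA2 \<alpha> \<kappa>1 C" and A3: "condA3 \<alpha> N0 \<kappa>2 C"
    and \<alpha>: "0 < \<alpha>" and k1: "0 < \<kappa>1" and k2: "0 < \<kappa>2"
  shows "0 \<le> jump_prob C x y"
    and "(\<integral>\<^sup>+ y. ennreal (jump_prob C x y) \<partial>count_space UNIV) = 1"
    and "0 \<le> rate C x"
    and "rate C x \<le> \<kappa>1 * Kc CARD('d) \<alpha>"
    and "0 < R \<Longrightarrow> (\<integral>\<^sup>+ y. ennreal (jump_prob C x y) \<partial>count_space {y. R \<le> norm (lat y - lat x)})
           \<le> ennreal (\<kappa>1 * Kc CARD('d) \<alpha> * R powr (-\<alpha>) / k2l \<kappa>2 \<alpha> TYPE('d))"
proof -
  define r where "r = rate C x"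
  have kl: "0 < k2l \<kappa>2 \<alpha> TYPE('d)" by (rule k2l_pos[OF k2])
  have rl: "k2l \<kappa>2 \<alpha> TYPE('d) \<le> r" unfolding r_def by (rule C_lower[OF A1 A2 A3 \<alpha> k1])
  have r0: "0 < r" using kl rl by simp
  have C0: "\<And>y. 0 \<le> C x y" using A1 by (simp add: condA1_def)
  show "0 \<le> jump_prob C x y" unfolding jump_prob_def r_def[symmetric] using C0 r0 by simp
  show "0 \<le> rate C x" using r0 unfolding r_def by simp
  have split: "ennreal (jump_prob C x y) = ennreal (C x y) * ennreal (1 / r)" for y
    unfolding jump_prob_def r_def[symmetric] using C0[of y] r0 by (simp add: ennreal_mult[symmetric])
  have int: "(\<integral>\<^sup>+ y. ennreal (jump_prob C x y) \<partial>count_space A) = (\<integral>\<^sup>+ y. ennreal (C x y) \<partial>count_space A) * ennreal (1 / r)" for A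
    unfolding split by (rule nn_integral_multc) auto
  have tot: "ennreal r = (\<integral>\<^sup>+ y. ennreal (C x y) \<partial>count_space UNIV)" unfolding r_def by (rule C_total(2)[OF A1 A2 \<alpha> k1])
  show "(\<integral>\<^sup>+ y. ennreal (jump_prob C x y) \<partial>count_space UNIV) = 1"
    unfolding int tot[symmetric] using r0 by (simp add: ennreal_mult[symmetric])
  have "ennreal r \<le> ennreal (\<kappa>1 * Kc CARD('d) \<alpha>)" unfolding tot by (rule C_total(1)[OF A1 A2 \<alpha> k1])
  moreover have "0 \<le> \<kappa>1 * Kc CARD('d) \<alpha>" using Kc_pos[OF \<alpha>, of "CARD('d)"] k1 by simp
  ultimately show "rate C x \<le> \<kappa>1 * Kc CARD('d) \<alpha>" unfolding r_def[symmetric]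
    using ennreal_le_iff by blast
  assume R: "0 < R"
  have "(\<integral>\<^sup>+ y. ennreal (jump_prob C x y) \<partial>count_space {y. R \<le> norm (lat y - lat x)})
       \<le> ennreal (\<kappa>1 * Kc CARD('d) \<alpha> * R powr (-\<alpha>)) * ennreal (1 / k2l \<kappa>2 \<alpha> TYPE('d))"
    unfolding int
  proof (rule mult_mono)
    show "ennreal (1 / r) \<le> ennreal (1 / k2l \<kappa>2 \<alpha> TYPE('d))"
      by (rule ennreal_leI) (use kl rl in \<open>simp add: frac_le\<close>)
  qed (use C_far[OF A1 A2 \<alpha> k1 R] in auto)
  also have "\<dots> = ennreal (\<kappa>1 * Kc CARD('d) \<alpha> * R powr (-\<alpha>) / k2l \<kappa>2 \<alpha> TYPE('d))"
    using Kc_pos[OF \<alpha>, of "CARD('d)"] k1 kl by (simp add: ennreal_mult[symmetric])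
  finally show "(\<integral>\<^sup>+ y. ennreal (jump_prob C x y) \<partial>count_space {y. R \<le> norm (lat y - lat x)})
           \<le> ennreal (\<kappa>1 * Kc CARD('d) \<alpha> * R powr (-\<alpha>) / k2l \<kappa>2 \<alpha> TYPE('d))" .
qed



lemma jtime_strict:
  assumes pos: "\<forall>i. 0 < S i \<omega>" and "m < n"
  shows "jtime S m \<omega> < jtime S n \<omega>"
  using assms(2)
proof (induction n)
  case 0 then show ?case by simp
next
  case (Suc n)
  have "jtime S (Suc n) \<omega> = jtime S n \<omega> + S n \<omega>" unfolding jtime_def by simp
  then show ?case using Suc pos[rule_format, of n] by (cases "m = n") auto
qed

lemma jtime_le_iff:
  assumes pos: "\<forall>i. 0 < S i \<omega>"
  shows "jtime S m \<omega> \<le> jtime S n \<omega> \<longleftrightarrow> m \<le> n"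
  using jtime_strict[where S=S and \<omega>=\<omega>, OF pos, of m n] jtime_strict[where S=S and \<omega>=\<omega>, OF pos, of n m]
  by (cases m n rule: linorder_cases) auto

lemma card_at_jtime:
  assumes pos: "\<forall>i. 0 < S i \<omega>"
  shows "card {n. 0 < n \<and> jtime S n \<omega> \<le> jtime S k \<omega>} = k"
proof -
  have "{n. 0 < n \<and> jtime S n \<omega> \<le> jtime S k \<omega>} = {0<..k}"
    using jtime_le_iff[where S=S and \<omega>=\<omega>, OF pos] by auto
  then show ?thesis by simp
qed

lemma card_mem:
  assumes pos: "\<forall>i. 0 < S i \<omega>" and ne: "card {n. 0 < n \<and> jtime S n \<omega> \<le> T} \<noteq> 0"
  shows "jtime S (card {n. 0 < n \<and> jtime S n \<omega> \<le> T}) \<omega> \<le> T"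
proof -
  define A where "A = {n. 0 < n \<and> jtime S n \<omega> \<le> T}"
  have fin: "finite A" using ne unfolding A_def by (meson card_eq_0_iff)
  have nonempty: "A \<noteq> {}" using ne unfolding A_def by (metis card.empty)
  define m where "m = Max A"
  have mA: "m \<in> A" unfolding m_def using fin nonempty by (rule Max_in)
  have "A = {0<..m}"
  proof
    show "A \<subseteq> {0<..m}"
    proof
      fix n assume n: "n \<in> A"
      then have "n \<le> m" unfolding m_def using fin by (simp add: Max_ge)
      moreover have "0 < n" using n unfolding A_def by simp
      ultimately show "n \<in> {0<..m}" by simp
    qed
    show "{0<..m} \<subseteq> A"
    proof
      fix n assume "n \<in> {0<..m}"
      then have "0 < n" "n \<le> m" by auto
      then have "jtime S n \<omega> \<le> jtime S m \<omega>" using jtime_le_iff[where S=S and \<omega>=\<omega>, OF pos] by blast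
      moreover have "jtime S m \<omega> \<le> T" using mA unfolding A_def by simp
      ultimately show "n \<in> A" using \<open>0 < n\<close> unfolding A_def by simp
    qed
  qed
  then have "card A = m" by simp
  then show ?thesis using mA unfolding A_def by simp
qed

lemma pathwise:
  fixes J :: "nat \<Rightarrow> 'w \<Rightarrow> int^'d" and S :: "nat \<Rightarrow> 'w \<Rightarrow> real" and t \<alpha> :: real
  assumes pos: "\<forall>i. 0 < S i \<omega>" and J0: "J 0 \<omega> = z"
    and \<rho>: "0 < \<rho>" and \<gamma>: "0 < \<gamma>" and r: "0 < r" and rs: "r < s" and \<alpha>0: "0 \<le> \<alpha>"
  defines "x \<equiv> (1 / \<rho>) *\<^sub>R lat z"
  defines "W \<equiv> (\<lambda>u. (t + u, pos_rho \<rho> \<alpha> J S u \<omega>))"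
  assumes out: "W (first_exit (Qbox \<gamma> \<alpha> \<rho> t x r) W) \<notin> Qbox \<gamma> \<alpha> \<rho> t x s"
  shows "\<exists>n. \<rho> * (s - r) \<le> norm (lat (J (Suc n) \<omega>) - lat (J n \<omega>)) \<and>
             jtime S (Suc n) \<omega> \<le> \<rho> powr \<alpha> * (\<gamma> * r powr \<alpha>)"
proof -
  define a where "a = \<rho> powr \<alpha>"
  have a: "0 < a" unfolding a_def using \<rho> by simp
  define N where "N u = card {n. 0 < n \<and> jtime S n \<omega> \<le> a * u}" for u
  have posu: "pos_rho \<rho> \<alpha> J S u \<omega> = (1 / \<rho>) *\<^sub>R lat (J (N u) \<omega>)" for u
    unfolding pos_rho_def ctmc_pos_def N_def a_def ..
  define U where "U = {u. 0 \<le> u \<and> W u \<notin> Qbox \<gamma> \<alpha> \<rho> t x r}"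
  define \<tau> where "\<tau> = Inf U"
  have \<tau>def: "first_exit (Qbox \<gamma> \<alpha> \<rho> t x r) W = \<tau>" unfolding first_exit_def \<tau>_def U_def ..
  have Uin: "u \<in> U" if "\<gamma> * r powr \<alpha> < u" for u
  proof -
    have "0 \<le> \<gamma> * r powr \<alpha>" using \<gamma> by simp
    then have "t + u \<notin> {t..t + \<gamma> * r powr \<alpha>}" using that by simp
    then show ?thesis using that \<open>0 \<le> \<gamma> * r powr \<alpha>\<close> unfolding U_def W_def Qbox_def by (simp add: mem_Times_iff)
  qed
  have bdd: "bdd_below U" unfolding U_def by (rule bdd_belowI[of _ 0]) auto
  have Une: "U \<noteq> {}" using Uin[of "\<gamma> * r powr \<alpha> + 1"] by auto
  have \<tau>0: "0 \<le> \<tau>" unfolding \<tau>_def by (rule cInf_greatest[OF Une]) (auto simp: U_def)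
  have \<tau>le: "\<tau> \<le> \<gamma> * r powr \<alpha>"
  proof (rule ccontr)
    assume "\<not> \<tau> \<le> \<gamma> * r powr \<alpha>"
    then have "(\<tau> + \<gamma> * r powr \<alpha>) / 2 \<in> U" by (intro Uin) auto
    then have "\<tau> \<le> (\<tau> + \<gamma> * r powr \<alpha>) / 2" unfolding \<tau>_def by (rule cInf_lower[OF _ bdd])
    then show False using \<open>\<not> \<tau> \<le> \<gamma> * r powr \<alpha>\<close> by simp
  qed
  have before: "dist x (pos_rho \<rho> \<alpha> J S u \<omega>) < r" if "0 \<le> u" "u < \<tau>" for u
  proof -
    have "u \<notin> U"
    proof
      assume "u \<in> U"
      then have "\<tau> \<le> u" unfolding \<tau>_def by (rule cInf_lower[OF _ bdd])
      then show False using that by simp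
    qed
    then have "W u \<in> Qbox \<gamma> \<alpha> \<rho> t x r" using that unfolding U_def by auto
    then show ?thesis unfolding W_def Qbox_def mem_Times_iff lball_def by simp
  qed
  have rspow: "\<gamma> * r powr \<alpha> \<le> \<gamma> * s powr \<alpha>"
    using powr_mono2[OF \<alpha>0, of r s] r rs \<gamma> by (intro mult_left_mono) auto
  have far: "\<not> dist x (pos_rho \<rho> \<alpha> J S \<tau> \<omega>) < s"
  proof
    assume "dist x (pos_rho \<rho> \<alpha> J S \<tau> \<omega>) < s"
    then have "W \<tau> \<in> Qbox \<gamma> \<alpha> \<rho> t x s"
    proof -
      have "pos_rho \<rho> \<alpha> J S \<tau> \<omega> \<in> lball \<rho> x s"
        unfolding lball_def using \<open>dist x (pos_rho \<rho> \<alpha> J S \<tau> \<omega>) < s\<close> posu by blast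
      moreover have "t + \<tau> \<in> {t..t + \<gamma> * s powr \<alpha>}" using \<tau>0 \<tau>le rspow by simp
      ultimately show ?thesis unfolding W_def Qbox_def by (simp add: mem_Times_iff)
    qed
    then show False using out \<tau>def by simp
  qed
  define m where "m = N \<tau>"
  have m0: "m \<noteq> 0"
  proof
    assume "m = 0"
    then have "pos_rho \<rho> \<alpha> J S \<tau> \<omega> = x" unfolding posu m_def[symmetric] x_def using J0 by simp
    then show False using far rs r by simp
  qed
  have jm: "jtime S m \<omega> \<le> a * \<tau>" using card_mem[where S=S and \<omega>=\<omega>, OF pos m0[unfolded m_def N_def]] unfolding m_def N_def .
  define u where "u = jtime S (m - 1) \<omega> / a"
  have au: "a * u = jtime S (m - 1) \<omega>" unfolding u_def using a by simp
  have "0 \<le> jtime S (m - 1) \<omega>" unfolding jtime_def using pos by (simp add: sum_nonneg less_imp_le)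
  then have u0: "0 \<le> u" unfolding u_def using a by simp
  have "jtime S (m - 1) \<omega> < jtime S m \<omega>" using jtime_strict[where S=S and \<omega>=\<omega>, OF pos, of "m - 1" m] m0 by simp
  then have "a * u < a * \<tau>" using au jm by simp
  then have ut: "u < \<tau>" using a by simp
  have Nu: "N u = m - 1" unfolding N_def au by (rule card_at_jtime[where S=S and \<omega>=\<omega>, OF pos])
  have d1: "dist x ((1 / \<rho>) *\<^sub>R lat (J (m - 1) \<omega>)) < r" using before[OF u0 ut] unfolding posu Nu .
  have d2: "s \<le> dist x ((1 / \<rho>) *\<^sub>R lat (J m \<omega>))" using far unfolding posu m_def[symmetric] by simp
  have "s - r \<le> dist ((1 / \<rho>) *\<^sub>R lat (J (m - 1) \<omega>)) ((1 / \<rho>) *\<^sub>R lat (J m \<omega>))"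
    using d1 d2 dist_triangle[of x "(1 / \<rho>) *\<^sub>R lat (J m \<omega>)" "(1 / \<rho>) *\<^sub>R lat (J (m - 1) \<omega>)"]
    by (simp add: dist_commute)
  also have "\<dots> = norm (lat (J m \<omega>) - lat (J (m - 1) \<omega>)) / \<rho>"
    unfolding dist_norm using \<rho> by (simp add: scaleR_diff_right[symmetric] norm_minus_commute)
  finally have "\<rho> * (s - r) \<le> norm (lat (J m \<omega>) - lat (J (m - 1) \<omega>))"
    using \<rho> by (simp add: field_simps)
  moreover have "jtime S m \<omega> \<le> \<rho> powr \<alpha> * (\<gamma> * r powr \<alpha>)"
    using jm \<tau>le a unfolding a_def by (smt (verit) mult_left_mono)
  ultimately show ?thesis using m0 by (intro exI[of _ "m - 1"]) simp
qed



lemma card_bound: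
  assumes pos: "\<forall>i. 0 < S i \<omega>" and d: "0 < \<delta>" and jt: "jtime S m \<omega> \<le> T"
  shows "card {i. i < m \<and> \<delta> < S i \<omega>} \<le> nat \<lfloor>T / \<delta>\<rfloor>"
proof -
  define A where "A = {i. i < m \<and> \<delta> < S i \<omega>}"
  have fA: "finite A" unfolding A_def by simp
  have "\<delta> * real (card A) = (\<Sum>i\<in>A. \<delta>)" by simp
  also have "\<dots> \<le> (\<Sum>i\<in>A. S i \<omega>)" by (rule sum_mono) (auto simp: A_def less_imp_le)
  also have "\<dots> \<le> (\<Sum>i<m. S i \<omega>)"
    by (rule sum_mono2) (auto simp: A_def less_imp_le pos)
  also have "\<dots> \<le> T" using jt unfolding jtime_def .
  finally have "real (card A) \<le> T / \<delta>" using d by (simp add: field_simps)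
  then have "int (card A) \<le> \<lfloor>T / \<delta>\<rfloor>" by (simp add: le_floor_iff)
  then show ?thesis unfolding A_def[symmetric] by linarith
qed

lemma final_arith:
  fixes \<alpha> \<gamma> Q0 k2 \<rho> r s :: real
  assumes \<alpha>: "0 < \<alpha>" and \<gamma>: "0 < \<gamma>" and Q0: "0 < Q0" and k2: "0 < k2" and \<rho>: "1 \<le> \<rho>"
    and r: "0 < r" and rs: "2 * r < s"
    and TQ: "1 \<le> \<rho> powr \<alpha> * (\<gamma> * r powr \<alpha>) * Q0"
  shows "Q0 * (\<rho> * (s - r)) powr (-\<alpha>) / k2 *
           ((real (nat \<lfloor>\<rho> powr \<alpha> * (\<gamma> * r powr \<alpha>) / (1 / Q0)\<rfloor>) + 1) * exp (Q0 * (1 / Q0)))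
         \<le> 2 * exp 1 * 2 powr \<alpha> * Q0 * Q0 * \<gamma> / k2 * r powr \<alpha> / s powr \<alpha>"
proof -
  define T where "T = \<rho> powr \<alpha> * (\<gamma> * r powr \<alpha>)"
  have T0: "0 \<le> T" unfolding T_def using \<gamma> by simp
  have s0: "0 < s" using r rs by simp
  define P where "P = (\<rho> * (s - r)) powr (-\<alpha>)"
  have P0: "0 \<le> P" unfolding P_def by simp
  have "P \<le> (\<rho> * s / 2) powr (-\<alpha>)"
    unfolding P_def using \<alpha> \<rho> r rs by (intro powr_mono2') (auto simp: field_simps)
  also have "(\<rho> * s / 2) powr (-\<alpha>) = 2 powr \<alpha> * \<rho> powr (-\<alpha>) * s powr (-\<alpha>)"
    using \<rho> s0 by (simp add: powr_divide powr_mult powr_minus field_simps)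
  finally have Pb: "P \<le> 2 powr \<alpha> * \<rho> powr (-\<alpha>) * s powr (-\<alpha>)" .
  define K where "K = real (nat \<lfloor>T / (1 / Q0)\<rfloor>)"
  have "K \<le> T / (1 / Q0)" unfolding K_def using T0 Q0 by (simp add: of_nat_nat)
  then have K: "K + 1 \<le> 2 * T * Q0" using TQ Q0 unfolding T_def by (simp add: field_simps)
  have K0: "0 \<le> K + 1" unfolding K_def by simp
  have e: "exp (Q0 * (1 / Q0)) = exp 1" using Q0 by simp
  have "Q0 * P / k2 * ((K + 1) * exp 1) \<le> Q0 * (2 powr \<alpha> * \<rho> powr (-\<alpha>) * s powr (-\<alpha>)) / k2 * ((2 * T * Q0) * exp 1)"
    using Pb K K0 P0 Q0 k2 T0 by (intro mult_mono divide_right_mono mult_left_mono) auto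
  also have "\<dots> = 2 * exp 1 * 2 powr \<alpha> * Q0 * Q0 * \<gamma> / k2 * r powr \<alpha> / s powr \<alpha>"
  proof -
    have "\<rho> powr (-\<alpha>) * \<rho> powr \<alpha> = 1" using \<rho> by (simp add: powr_add[symmetric])
    then show ?thesis unfolding T_def using s0 k2 \<rho> by (simp add: powr_minus field_simps)
  qed
  finally show ?thesis unfolding e P_def[symmetric] T_def[symmetric] K_def[symmetric] .
qed



lemma emeasure_le_partition:
  fixes f :: "'w \<Rightarrow> 'v::countable"
  assumes f: "f \<in> M \<rightarrow>\<^sub>M count_space UNIV" and E1: "E1 \<in> sets M" and E2: "E2 \<in> sets M"
    and le: "\<And>v. emeasure M (E1 \<inter> (f -` {v} \<inter> space M)) \<le> c * emeasure M (E2 \<inter> (f -` {v} \<inter> space M))"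
  shows "emeasure M E1 \<le> c * emeasure M E2"
proof -
  have pre: "\<And>v. f -` {v} \<inter> space M \<in> sets M" using f by (simp add: measurable_count_space_eq2_countable)
  have dec: "emeasure M E = (\<integral>\<^sup>+ v. emeasure M (E \<inter> (f -` {v} \<inter> space M)) \<partial>count_space UNIV)"
    if E: "E \<in> sets M" for E
  proof -
    have "E = (\<Union>v\<in>UNIV. E \<inter> (f -` {v} \<inter> space M))" using sets.sets_into_space[OF E] by auto
    then have "emeasure M E = emeasure M (\<Union>v\<in>UNIV. E \<inter> (f -` {v} \<inter> space M))" by simp
    also have "\<dots> = (\<integral>\<^sup>+ v. emeasure M (E \<inter> (f -` {v} \<inter> space M)) \<partial>count_space UNIV)"
      by (rule emeasure_UN_countable) (auto simp: pre E disjoint_family_on_def)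
    finally show ?thesis .
  qed
  show ?thesis
    unfolding dec[OF E1] dec[OF E2]
    by (subst nn_integral_cmult[symmetric]) (auto intro!: nn_integral_mono le)
qed

locale chain =
  fixes M :: "'w measure" and C :: "int^'d \<Rightarrow> int^'d \<Rightarrow> real" and z :: "int^'d"
    and J :: "nat \<Rightarrow> 'w \<Rightarrow> int^'d" and S :: "nat \<Rightarrow> 'w \<Rightarrow> real"
  assumes ctmc: "is_ctmc M C z J S"
begin

lemma prob: "prob_space M" using ctmc unfolding is_ctmc_def by blast

sublocale prob_space M by (rule prob)

lemma J_meas[measurable]: "J n \<in> M \<rightarrow>\<^sub>M count_space UNIV"
  using ctmc unfolding is_ctmc_def by blast
lemma S_meas[measurable]: "S n \<in> borel_measurable M"
  using ctmc unfolding is_ctmc_def by blast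

lemma formula:
  assumes "\<And>i. 0 \<le> ts i"
  shows "measure M {\<omega> \<in> space M. (\<forall>i\<le>n. J i \<omega> = xs i) \<and> (\<forall>i<n. ts i < S i \<omega>)}
        = (if xs 0 = z then 1 else 0) *
          (\<Prod>i<n. jump_prob C (xs i) (xs (Suc i)) * exp (- rate C (xs i) * ts i))"
  using ctmc assms unfolding is_ctmc_def by blast

definition ev :: "real \<Rightarrow> nat \<Rightarrow> (nat \<Rightarrow> int^'d) \<Rightarrow> nat set \<Rightarrow> (nat \<Rightarrow> real) \<Rightarrow> 'w set" where
  "ev \<delta> n xs F ts = {\<omega> \<in> space M. (\<forall>i\<le>n. J i \<omega> = xs i) \<and>
     (\<forall>i<n. if i \<in> F then 0 < S i \<omega> \<and> S i \<omega> \<le> \<delta> else ts i < S i \<omega>)}"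

definition wt :: "real \<Rightarrow> (nat \<Rightarrow> int^'d) \<Rightarrow> nat set \<Rightarrow> (nat \<Rightarrow> real) \<Rightarrow> nat \<Rightarrow> real" where
  "wt \<delta> xs F ts i = (if i \<in> F then 1 - exp (- rate C (xs i) * \<delta>) else exp (- rate C (xs i) * ts i))"

lemma ev_sets[measurable]: "ev \<delta> n xs F ts \<in> sets M"
  unfolding ev_def by measurable

lemma ev_formula:
  assumes "finite F" "\<And>i. 0 \<le> ts i" "0 \<le> \<delta>"
  shows "measure M (ev \<delta> n xs F ts) = (if xs 0 = z then 1 else 0) *
          (\<Prod>i<n. jump_prob C (xs i) (xs (Suc i)) * wt \<delta> xs F ts i)"
  using assms(1,2)
proof (induction F arbitrary: ts rule: finite_induct)
  case empty
  then show ?case unfolding ev_def wt_def using formula[OF empty.prems] by simp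
next
  case (insert j F)
  show ?case
  proof (cases "j < n")
    case True
    have sub: "ev \<delta> n xs F (ts(j:=\<delta>)) \<subseteq> ev \<delta> n xs F (ts(j:=0))"
    proof
      fix \<omega> assume a: "\<omega> \<in> ev \<delta> n xs F (ts(j:=\<delta>))"
      show "\<omega> \<in> ev \<delta> n xs F (ts(j:=0))"
        unfolding ev_def
      proof (intro CollectI conjI allI impI)
        fix i assume i: "i < n"
        show "if i \<in> F then 0 < S i \<omega> \<and> S i \<omega> \<le> \<delta> else (ts(j:=0)) i < S i \<omega>"
          using a i \<open>0 \<le> \<delta>\<close> unfolding ev_def by (cases "i = j") force+
      qed (use a in \<open>auto simp: ev_def\<close>)
    qed
    have eq: "ev \<delta> n xs (insert j F) ts = ev \<delta> n xs F (ts(j:=0)) - ev \<delta> n xs F (ts(j:=\<delta>))"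
    proof (rule set_eqI, rule iffI)
      fix \<omega> assume a: "\<omega> \<in> ev \<delta> n xs (insert j F) ts"
      have A1: "\<omega> \<in> space M" "\<forall>i\<le>n. J i \<omega> = xs i" using a unfolding ev_def by auto
      have A2: "\<And>i. i < n \<Longrightarrow> (if i \<in> insert j F then 0 < S i \<omega> \<and> S i \<omega> \<le> \<delta> else ts i < S i \<omega>)"
        using a unfolding ev_def by blast
      have j: "0 < S j \<omega> \<and> S j \<omega> \<le> \<delta>" using A2[OF True] by simp
      have "\<omega> \<in> ev \<delta> n xs F (ts(j:=0))"
        unfolding ev_def
      proof (intro CollectI conjI allI impI)
        fix i assume i: "i < n"
        show "if i \<in> F then 0 < S i \<omega> \<and> S i \<omega> \<le> \<delta> else (ts(j:=0)) i < S i \<omega>"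
          using A2[OF i] j insert.hyps(2) by (cases "i = j") auto
      qed (use A1 in auto)
      moreover have "\<omega> \<notin> ev \<delta> n xs F (ts(j:=\<delta>))"
      proof
        assume "\<omega> \<in> ev \<delta> n xs F (ts(j:=\<delta>))"
        then have "if j \<in> F then 0 < S j \<omega> \<and> S j \<omega> \<le> \<delta> else (ts(j:=\<delta>)) j < S j \<omega>"
          using True unfolding ev_def by blast
        then show False using j insert.hyps(2) by simp
      qed
      ultimately show "\<omega> \<in> ev \<delta> n xs F (ts(j:=0)) - ev \<delta> n xs F (ts(j:=\<delta>))" by blast
    next
      fix \<omega> assume a: "\<omega> \<in> ev \<delta> n xs F (ts(j:=0)) - ev \<delta> n xs F (ts(j:=\<delta>))"
      have A1: "\<omega> \<in> space M" "\<forall>i\<le>n. J i \<omega> = xs i" using a unfolding ev_def by auto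
      have A2: "\<And>i. i < n \<Longrightarrow> (if i \<in> F then 0 < S i \<omega> \<and> S i \<omega> \<le> \<delta> else (ts(j:=0)) i < S i \<omega>)"
        using a unfolding ev_def by blast
      have j1: "0 < S j \<omega>" using A2[OF True] insert.hyps(2) by simp
      have j2: "S j \<omega> \<le> \<delta>"
      proof (rule ccontr)
        assume "\<not> S j \<omega> \<le> \<delta>"
        then have "\<omega> \<in> ev \<delta> n xs F (ts(j:=\<delta>))"
          unfolding ev_def
        proof (intro CollectI conjI allI impI)
          fix i assume i: "i < n"
          show "if i \<in> F then 0 < S i \<omega> \<and> S i \<omega> \<le> \<delta> else (ts(j:=\<delta>)) i < S i \<omega>"
            using A2[OF i] \<open>\<not> S j \<omega> \<le> \<delta>\<close> insert.hyps(2) by (cases "i = j") auto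
        qed (use A1 in auto)
        then show False using a by blast
      qed
      show "\<omega> \<in> ev \<delta> n xs (insert j F) ts"
        unfolding ev_def
      proof (intro CollectI conjI allI impI)
        fix i assume i: "i < n"
        show "if i \<in> insert j F then 0 < S i \<omega> \<and> S i \<omega> \<le> \<delta> else ts i < S i \<omega>"
          using A2[OF i] j1 j2 insert.hyps(2) by (cases "i = j") auto
      qed (use A1 in auto)
    qed
    have m: "measure M (ev \<delta> n xs (insert j F) ts) =
       measure M (ev \<delta> n xs F (ts(j:=0))) - measure M (ev \<delta> n xs F (ts(j:=\<delta>)))"
      unfolding eq by (rule finite_measure_Diff) (auto simp: sub)
    have h0: "\<And>i. 0 \<le> (ts(j:=0)) i" and hd: "\<And>i. 0 \<le> (ts(j:=\<delta>)) i"
      using insert.prems \<open>0 \<le> \<delta>\<close> by auto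
    have P: "\<And>g. (\<Prod>i<n. g i) = g j * (\<Prod>i\<in>{..<n}-{j}. g i)"
      using True by (subst prod.remove[of "{..<n}" j]) auto
    have c1: "(\<Prod>i\<in>{..<n}-{j}. jump_prob C (xs i) (xs (Suc i)) * wt \<delta> xs F (ts(j:=0)) i) = (\<Prod>i\<in>{..<n}-{j}. jump_prob C (xs i) (xs (Suc i)) * wt \<delta> xs (insert j F) ts i)"
      by (rule prod.cong) (auto simp: wt_def)
    have c2: "(\<Prod>i\<in>{..<n}-{j}. jump_prob C (xs i) (xs (Suc i)) * wt \<delta> xs F (ts(j:=\<delta>)) i) = (\<Prod>i\<in>{..<n}-{j}. jump_prob C (xs i) (xs (Suc i)) * wt \<delta> xs (insert j F) ts i)"
      by (rule prod.cong) (auto simp: wt_def)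
    show ?thesis
      unfolding m insert.IH[OF h0] insert.IH[OF hd]
      apply (subst (1 2 3) P)
      unfolding c1 c2 using insert.hyps(2) by (simp add: wt_def algebra_simps)
  next
    case False
    have eq: "ev \<delta> n xs (insert j F) ts = ev \<delta> n xs F ts"
    proof -
      have "\<And>i. i < n \<Longrightarrow> (i \<in> insert j F) = (i \<in> F)" using False by auto
      then show ?thesis unfolding ev_def by (intro Collect_cong conj_cong refl all_cong imp_cong) simp_all
    qed
    have c: "(\<Prod>i<n. jump_prob C (xs i) (xs (Suc i)) * wt \<delta> xs (insert j F) ts i)
       = (\<Prod>i<n. jump_prob C (xs i) (xs (Suc i)) * wt \<delta> xs F ts i)"
      using False by (intro prod.cong) (auto simp: wt_def)
    show ?thesis unfolding eq c using insert by simp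
  qed
qed

end

locale chainC = chain M C z J S
  for M :: "'w measure" and C :: "int^'d \<Rightarrow> int^'d \<Rightarrow> real" and z J S +
  assumes jp_nonneg: "\<And>x y. 0 \<le> jump_prob C x y"
    and jp_sum: "\<And>x. (\<integral>\<^sup>+ y. ennreal (jump_prob C x y) \<partial>count_space UNIV) = 1"
    and rate_nonneg: "\<And>x. 0 \<le> rate C x"
begin

definition evY :: "real \<Rightarrow> nat \<Rightarrow> (nat \<Rightarrow> int^'d) \<Rightarrow> nat set \<Rightarrow> (nat \<Rightarrow> real) \<Rightarrow> (int^'d) set \<Rightarrow> 'w set" where
  "evY \<delta> n xs F ts Y = {\<omega> \<in> space M. (\<forall>i\<le>n. J i \<omega> = xs i) \<and> J (Suc n) \<omega> \<in> Y \<and>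
     (\<forall>i<Suc n. if i \<in> F then 0 < S i \<omega> \<and> S i \<omega> \<le> \<delta> else ts i < S i \<omega>)}"

lemma evY_sets[measurable]: "evY \<delta> n xs F ts Y \<in> sets M"
  unfolding evY_def by measurable

lemma wt_nonneg: "0 \<le> \<delta> \<Longrightarrow> 0 \<le> wt \<delta> xs F ts i"
  unfolding wt_def using rate_nonneg[of "xs i"] by (auto simp: mult_nonneg_nonneg)

lemma evY_formula:
  assumes "finite F" "\<And>i. 0 \<le> ts i" "0 \<le> \<delta>"
  shows "emeasure M (evY \<delta> n xs F ts Y) = ennreal ((if xs 0 = z then 1 else 0) *
          (\<Prod>i<n. jump_prob C (xs i) (xs (Suc i)) * wt \<delta> xs F ts i) * wt \<delta> xs F ts n)
         * (\<integral>\<^sup>+ y. ennreal (jump_prob C (xs n) y) \<partial>count_space Y)"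
proof -
  define X where "X y = ev \<delta> (Suc n) (xs(Suc n := y)) F ts" for y
  have U: "evY \<delta> n xs F ts Y = (\<Union>y\<in>Y. X y)"
    unfolding evY_def X_def ev_def by (auto simp: le_Suc_eq)
  have D: "disjoint_family_on X Y"
    unfolding disjoint_family_on_def X_def ev_def by auto
  define A where "A = (if xs 0 = z then 1 else 0) *
          (\<Prod>i<n. jump_prob C (xs i) (xs (Suc i)) * wt \<delta> xs F ts i) * wt \<delta> xs F ts n"
  have A0: "0 \<le> A" unfolding A_def
    using jp_nonneg wt_nonneg[OF assms(3)] by (auto intro!: mult_nonneg_nonneg prod_nonneg)
  have wteq: "\<And>i. i \<le> n \<Longrightarrow> wt \<delta> (xs(Suc n := y)) F ts i = wt \<delta> xs F ts i" for y
    unfolding wt_def by auto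
  have MX: "measure M (X y) = A * jump_prob C (xs n) y" for y
  proof -
    have "measure M (X y) = (if xs 0 = z then 1 else 0) *
       (\<Prod>i<Suc n. jump_prob C ((xs(Suc n := y)) i) ((xs(Suc n := y)) (Suc i)) * wt \<delta> (xs(Suc n := y)) F ts i)"
      unfolding X_def by (subst ev_formula[OF assms]) simp
    also have "(\<Prod>i<Suc n. jump_prob C ((xs(Suc n := y)) i) ((xs(Suc n := y)) (Suc i)) * wt \<delta> (xs(Suc n := y)) F ts i)
      = (\<Prod>i<n. jump_prob C (xs i) (xs (Suc i)) * wt \<delta> xs F ts i) * (jump_prob C (xs n) y * wt \<delta> xs F ts n)"
    proof -
      have "(\<Prod>i<n. jump_prob C ((xs(Suc n := y)) i) ((xs(Suc n := y)) (Suc i)) * wt \<delta> (xs(Suc n := y)) F ts i)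
          = (\<Prod>i<n. jump_prob C (xs i) (xs (Suc i)) * wt \<delta> xs F ts i)"
        by (rule prod.cong) (auto simp: wteq)
      then show ?thesis using wteq[of n y] by simp
    qed
    finally show ?thesis unfolding A_def by (simp add: algebra_simps)
  qed
  have "emeasure M (evY \<delta> n xs F ts Y) = (\<integral>\<^sup>+ y. emeasure M (X y) \<partial>count_space Y)"
    unfolding U by (rule emeasure_UN_countable) (auto simp: X_def D)
  also have "\<dots> = (\<integral>\<^sup>+ y. ennreal A * ennreal (jump_prob C (xs n) y) \<partial>count_space Y)"
    by (rule nn_integral_cong) (simp add: emeasure_eq_measure MX ennreal_mult A0 jp_nonneg)
  also have "\<dots> = ennreal A * (\<integral>\<^sup>+ y. ennreal (jump_prob C (xs n) y) \<partial>count_space Y)"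
    by (rule nn_integral_cmult) auto
  finally show ?thesis unfolding A_def .
qed

definition fm :: "real \<Rightarrow> nat \<Rightarrow> nat \<Rightarrow> 'w \<Rightarrow> (int^'d) list \<times> bool list" where
  "fm \<delta> n k \<omega> = (map (\<lambda>i. J i \<omega>) [0..<Suc n], map (\<lambda>i. \<delta> < S i \<omega>) [0..<k])"

lemma map_upt_eq: "map f [0..<k] = l \<longleftrightarrow> length l = k \<and> (\<forall>i<k. f i = l!i)"
  by (auto simp: list_eq_iff_nth_eq)

lemma fm_pre: "fm \<delta> n k -` {(l, b)} \<inter> space M = (if length l = Suc n \<and> length b = k then
    {\<omega>\<in>space M. (\<forall>i\<le>n. J i \<omega> = l!i) \<and> (\<forall>i<k. (\<delta> < S i \<omega>) = b!i)} else {})"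
  proof -
  have "\<And>\<omega>. (\<forall>i<Suc n. J i \<omega> = l!i) = (\<forall>i\<le>n. J i \<omega> = l!i)" using less_Suc_eq_le by blast
  moreover have "fm \<delta> n k -` {(l, b)} \<inter> space M = {\<omega>\<in>space M. map (\<lambda>i. J i \<omega>) [0..<Suc n] = l \<and> map (\<lambda>i. \<delta> < S i \<omega>) [0..<k] = b}"
    by (auto simp: fm_def simp del: upt_Suc)
  ultimately show ?thesis by (simp only: map_upt_eq) auto
qed

lemma fm_meas[measurable]: "fm \<delta> n k \<in> M \<rightarrow>\<^sub>M count_space UNIV"
  unfolding measurable_count_space_eq2_countable
proof (intro conjI ballI)
  fix v :: "(int^'d) list \<times> bool list"
  obtain l b where v: "v = (l, b)" by (cases v)
  have "{\<omega>\<in>space M. (\<forall>i\<le>n. J i \<omega> = l!i) \<and> (\<forall>i<k. (\<delta> < S i \<omega>) = b!i)} \<in> sets M"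
    by measurable
  then show "fm \<delta> n k -` {v} \<inter> space M \<in> sets M" unfolding v fm_pre by simp
qed auto

lemma pos_step: "emeasure M {\<omega>\<in>space M. \<forall>i<n. 0 < S i \<omega>} \<le> 1 * emeasure M {\<omega>\<in>space M. \<forall>i<Suc n. 0 < S i \<omega>}"
proof (rule emeasure_le_partition[OF fm_meas[of 0 n 0]])
  fix v :: "(int^'d) list \<times> bool list"
  obtain l b where v: "v = (l, b)" by (cases v)
  define xs where "xs i = l ! i" for i
  show "emeasure M ({\<omega>\<in>space M. \<forall>i<n. 0 < S i \<omega>} \<inter> (fm 0 n 0 -` {v} \<inter> space M))
     \<le> 1 * emeasure M ({\<omega>\<in>space M. \<forall>i<Suc n. 0 < S i \<omega>} \<inter> (fm 0 n 0 -` {v} \<inter> space M))"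
  proof (cases "length l = Suc n \<and> length b = 0")
    case True
    have e1: "{\<omega>\<in>space M. \<forall>i<n. 0 < S i \<omega>} \<inter> (fm 0 n 0 -` {v} \<inter> space M) = ev 0 n xs {} (\<lambda>_. 0)"
      unfolding v fm_pre ev_def xs_def using True by auto
    have e2: "{\<omega>\<in>space M. \<forall>i<Suc n. 0 < S i \<omega>} \<inter> (fm 0 n 0 -` {v} \<inter> space M) = evY 0 n xs {} (\<lambda>_. 0) UNIV"
      unfolding v fm_pre evY_def xs_def using True by auto
    show ?thesis unfolding e1 e2 emeasure_eq_measure
      by (subst evY_formula[unfolded emeasure_eq_measure]) (auto simp: ev_formula wt_def jp_sum)
  qed (auto simp: v fm_pre)
qed auto

lemma pos_one: "prob {\<omega>\<in>space M. \<forall>i<n. 0 < S i \<omega>} = 1"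
proof (induction n)
  case 0 then show ?case by (simp add: prob_space)
next
  case (Suc n)
  have "emeasure M {\<omega>\<in>space M. \<forall>i<n. 0 < S i \<omega>} \<le> emeasure M {\<omega>\<in>space M. \<forall>i<Suc n. 0 < S i \<omega>}"
    using pos_step by simp
  then have "1 \<le> prob {\<omega>\<in>space M. \<forall>i<Suc n. 0 < S i \<omega>}"
    using Suc by (simp add: emeasure_eq_measure)
  then show ?case using prob_le_1 by (simp add: antisym)
qed

lemma AE_pos: "AE \<omega> in M. \<forall>i. 0 < S i \<omega>"
proof -
  have "AE \<omega> in M. \<forall>i<Suc n. 0 < S i \<omega>" for n
    using pos_one[of "Suc n"] prob_eq_1[of "{\<omega>\<in>space M. \<forall>i<Suc n. 0 < S i \<omega>}"] by auto
  then have "AE \<omega> in M. \<forall>n. \<forall>i<Suc n. 0 < S i \<omega>" by (simp add: AE_all_countable)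
  then show ?thesis by eventually_elim auto
qed

lemma AE_J0: "AE \<omega> in M. J 0 \<omega> = z"
proof -
  have "prob {\<omega>\<in>space M. (\<forall>i\<le>0. J i \<omega> = (\<lambda>_. z) i) \<and> (\<forall>i<0. (\<lambda>_. 0) i < S i \<omega>)} = 1"
    by (subst formula) auto
  then have "prob {\<omega>\<in>space M. J 0 \<omega> = z} = 1" by simp
  then show ?thesis using prob_eq_1[of "{\<omega>\<in>space M. J 0 \<omega> = z}"] by auto
qed


lemma pat_iff:
  assumes "0 \<le> \<delta>"
  shows "((\<forall>i<k. 0 < S i \<omega>) \<and> (\<forall>i<k. (\<delta> < S i \<omega>) = b!i)) \<longleftrightarrow>
    (\<forall>i<k. if i \<in> {i. i<k \<and> \<not> b!i} then 0 < S i \<omega> \<and> S i \<omega> \<le> \<delta> else \<delta> < S i \<omega>)"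
proof
  assume a: "(\<forall>i<k. 0 < S i \<omega>) \<and> (\<forall>i<k. (\<delta> < S i \<omega>) = b!i)"
  show "\<forall>i<k. if i \<in> {i. i<k \<and> \<not> b!i} then 0 < S i \<omega> \<and> S i \<omega> \<le> \<delta> else \<delta> < S i \<omega>"
  proof (intro allI impI)
    fix i assume i: "i < k"
    show "if i \<in> {i. i<k \<and> \<not> b!i} then 0 < S i \<omega> \<and> S i \<omega> \<le> \<delta> else \<delta> < S i \<omega>"
      using a i by (cases "b!i") auto
  qed
next
  assume a: "\<forall>i<k. if i \<in> {i. i<k \<and> \<not> b!i} then 0 < S i \<omega> \<and> S i \<omega> \<le> \<delta> else \<delta> < S i \<omega>"
  have h: "if i \<in> {i. i<k \<and> \<not> b!i} then 0 < S i \<omega> \<and> S i \<omega> \<le> \<delta> else \<delta> < S i \<omega>" if "i < k" for i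
    using a that by blast
  show "(\<forall>i<k. 0 < S i \<omega>) \<and> (\<forall>i<k. (\<delta> < S i \<omega>) = b!i)"
  proof (intro conjI allI impI)
    fix i assume i: "i < k"
    show "0 < S i \<omega>" using h[OF i] assms i by (cases "b!i") auto
    show "(\<delta> < S i \<omega>) = b!i" using h[OF i] assms i by (cases "b!i") auto
  qed
qed

lemma card_pat:
  assumes "\<forall>i<k. (\<delta> < S i \<omega>) = b!i"
  shows "{i. i<k \<and> \<delta> < S i \<omega>} = {i. i<k \<and> b!i}"
  using assms by auto

lemma far_step:
  assumes d: "0 \<le> \<delta>"
    and far: "\<And>x. (\<integral>\<^sup>+ y. ennreal (jump_prob C x y) \<partial>count_space {y. R \<le> norm (lat y - lat x)}) \<le> c"
  shows "emeasure M {\<omega>\<in>space M. (\<forall>i<Suc n. 0 < S i \<omega>) \<and> R \<le> norm (lat (J (Suc n) \<omega>) - lat (J n \<omega>))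
            \<and> card {i. i<Suc n \<and> \<delta> < S i \<omega>} \<le> K}
    \<le> c * emeasure M {\<omega>\<in>space M. (\<forall>i<Suc n. 0 < S i \<omega>) \<and> card {i. i<Suc n \<and> \<delta> < S i \<omega>} \<le> K}"
proof (rule emeasure_le_partition[OF fm_meas[of \<delta> n "Suc n"]])
  fix v :: "(int^'d) list \<times> bool list"
  obtain l b where v: "v = (l, b)" by (cases v)
  define xs where "xs i = l ! i" for i
  define F where "F = {i. i<Suc n \<and> \<not> b!i}"
  have fF: "finite F" unfolding F_def by auto
  let ?E1 = "{\<omega>\<in>space M. (\<forall>i<Suc n. 0 < S i \<omega>) \<and> R \<le> norm (lat (J (Suc n) \<omega>) - lat (J n \<omega>))
            \<and> card {i. i<Suc n \<and> \<delta> < S i \<omega>} \<le> K}"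
  let ?E2 = "{\<omega>\<in>space M. (\<forall>i<Suc n. 0 < S i \<omega>) \<and> card {i. i<Suc n \<and> \<delta> < S i \<omega>} \<le> K}"
  show "emeasure M (?E1 \<inter> (fm \<delta> n (Suc n) -` {v} \<inter> space M)) \<le> c * emeasure M (?E2 \<inter> (fm \<delta> n (Suc n) -` {v} \<inter> space M))"
  proof (cases "length l = Suc n \<and> length b = Suc n \<and> card {i. i<Suc n \<and> b!i} \<le> K")
    case True
    have e1: "?E1 \<inter> (fm \<delta> n (Suc n) -` {v} \<inter> space M) = evY \<delta> n xs F (\<lambda>_. \<delta>) {y. R \<le> norm (lat y - lat (xs n))}"
    proof -
      have "?E1 \<inter> (fm \<delta> n (Suc n) -` {v} \<inter> space M) = {\<omega>\<in>space M. (\<forall>i\<le>n. J i \<omega> = xs i) \<and> R \<le> norm (lat (J (Suc n) \<omega>) - lat (xs n))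
        \<and> ((\<forall>i<Suc n. 0 < S i \<omega>) \<and> (\<forall>i<Suc n. (\<delta> < S i \<omega>) = b!i))}"
        unfolding v fm_pre xs_def using True card_pat[of "Suc n" \<delta> _ b] by auto
      also have "\<dots> = evY \<delta> n xs F (\<lambda>_. \<delta>) {y. R \<le> norm (lat y - lat (xs n))}"
        unfolding evY_def F_def pat_iff[OF d] by auto
      finally show ?thesis .
    qed
    have e2: "?E2 \<inter> (fm \<delta> n (Suc n) -` {v} \<inter> space M) = evY \<delta> n xs F (\<lambda>_. \<delta>) UNIV"
    proof -
      have "?E2 \<inter> (fm \<delta> n (Suc n) -` {v} \<inter> space M) = {\<omega>\<in>space M. (\<forall>i\<le>n. J i \<omega> = xs i)
        \<and> ((\<forall>i<Suc n. 0 < S i \<omega>) \<and> (\<forall>i<Suc n. (\<delta> < S i \<omega>) = b!i))}"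
        unfolding v fm_pre xs_def using True card_pat[of "Suc n" \<delta> _ b] by auto
      also have "\<dots> = evY \<delta> n xs F (\<lambda>_. \<delta>) UNIV"
        unfolding evY_def F_def pat_iff[OF d] by auto
      finally show ?thesis .
    qed
    have h1: "emeasure M (evY \<delta> n xs F (\<lambda>_. \<delta>) Y) = ennreal ((if xs 0 = z then 1 else 0) *
          (\<Prod>i<n. jump_prob C (xs i) (xs (Suc i)) * wt \<delta> xs F (\<lambda>_. \<delta>) i) * wt \<delta> xs F (\<lambda>_. \<delta>) n)
         * (\<integral>\<^sup>+ y. ennreal (jump_prob C (xs n) y) \<partial>count_space Y)" for Y
      by (rule evY_formula) (use fF d in auto)
    let ?A = "ennreal ((if xs 0 = z then 1 else 0) *
          (\<Prod>i<n. jump_prob C (xs i) (xs (Suc i)) * wt \<delta> xs F (\<lambda>_. \<delta>) i) * wt \<delta> xs F (\<lambda>_. \<delta>) n)"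
    have "?A * (\<integral>\<^sup>+ y. ennreal (jump_prob C (xs n) y) \<partial>count_space {y. R \<le> norm (lat y - lat (xs n))}) \<le> ?A * c"
      using far[of "xs n"] by (rule mult_left_mono) simp
    then show ?thesis unfolding e1 e2 h1 jp_sum by (simp add: mult.commute)
  next
    case False
    have "?E1 \<inter> (fm \<delta> n (Suc n) -` {v} \<inter> space M) = {}"
      using False card_pat[of "Suc n" \<delta> _ b] unfolding v fm_pre by auto
    then show ?thesis by simp
  qed
qed auto

lemma succ_step:
  assumes d: "0 \<le> \<delta>" and Q: "\<And>x. rate C x \<le> Q"
  shows "emeasure M {\<omega>\<in>space M. (\<forall>i<m. 0 < S i \<omega>) \<and> card {i. i<m \<and> \<delta> < S i \<omega>} = k}
    \<le> ennreal (exp (Q * \<delta>)) * emeasure M {\<omega>\<in>space M. (\<forall>i<Suc m. 0 < S i \<omega>)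
          \<and> card {i. i<m \<and> \<delta> < S i \<omega>} = k \<and> \<delta> < S m \<omega>}"
proof (rule emeasure_le_partition[OF fm_meas[of \<delta> m m]])
  fix v :: "(int^'d) list \<times> bool list"
  obtain l b where v: "v = (l, b)" by (cases v)
  define xs where "xs i = l ! i" for i
  define F where "F = {i. i<m \<and> \<not> b!i}"
  have fF: "finite F" unfolding F_def by auto
  let ?E1 = "{\<omega>\<in>space M. (\<forall>i<m. 0 < S i \<omega>) \<and> card {i. i<m \<and> \<delta> < S i \<omega>} = k}"
  let ?E2 = "{\<omega>\<in>space M. (\<forall>i<Suc m. 0 < S i \<omega>) \<and> card {i. i<m \<and> \<delta> < S i \<omega>} = k \<and> \<delta> < S m \<omega>}"
  show "emeasure M (?E1 \<inter> (fm \<delta> m m -` {v} \<inter> space M)) \<le> ennreal (exp (Q * \<delta>)) * emeasure M (?E2 \<inter> (fm \<delta> m m -` {v} \<inter> space M))"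
  proof (cases "length l = Suc m \<and> length b = m \<and> card {i. i<m \<and> b!i} = k")
    case True
    have e1: "?E1 \<inter> (fm \<delta> m m -` {v} \<inter> space M) = ev \<delta> m xs F (\<lambda>_. \<delta>)"
    proof -
      have "?E1 \<inter> (fm \<delta> m m -` {v} \<inter> space M) = {\<omega>\<in>space M. (\<forall>i\<le>m. J i \<omega> = xs i)
        \<and> ((\<forall>i<m. 0 < S i \<omega>) \<and> (\<forall>i<m. (\<delta> < S i \<omega>) = b!i))}"
        unfolding v fm_pre xs_def using True card_pat[of m \<delta> _ b] by auto
      also have "\<dots> = ev \<delta> m xs F (\<lambda>_. \<delta>)"
        unfolding ev_def F_def pat_iff[OF d] by auto
      finally show ?thesis .
    qed
    have e2: "?E2 \<inter> (fm \<delta> m m -` {v} \<inter> space M) = evY \<delta> m xs F (\<lambda>_. \<delta>) UNIV"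
    proof -
      have "?E2 \<inter> (fm \<delta> m m -` {v} \<inter> space M) = {\<omega>\<in>space M. (\<forall>i\<le>m. J i \<omega> = xs i)
        \<and> (((\<forall>i<m. 0 < S i \<omega>) \<and> (\<forall>i<m. (\<delta> < S i \<omega>) = b!i)) \<and> \<delta> < S m \<omega>)}"
        unfolding v fm_pre xs_def using True card_pat[of m \<delta> _ b] d by (auto simp: less_Suc_eq)
      also have "\<dots> = evY \<delta> m xs F (\<lambda>_. \<delta>) UNIV"
        unfolding evY_def F_def pat_iff[OF d] by (auto simp: less_Suc_eq)
      finally show ?thesis .
    qed
    define B where "B = (if xs 0 = z then 1 else 0) * (\<Prod>i<m. jump_prob C (xs i) (xs (Suc i)) * wt \<delta> xs F (\<lambda>_. \<delta>) i)"
    have B0: "0 \<le> B" unfolding B_def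
      using jp_nonneg wt_nonneg[OF d] by (auto intro!: mult_nonneg_nonneg prod_nonneg)
    have wm: "wt \<delta> xs F (\<lambda>_. \<delta>) m = exp (- rate C (xs m) * \<delta>)" unfolding wt_def F_def by auto
    have "B \<le> exp (Q * \<delta>) * (B * exp (- rate C (xs m) * \<delta>))"
    proof -
      have "exp (Q * \<delta>) * exp (- rate C (xs m) * \<delta>) = exp ((Q - rate C (xs m)) * \<delta>)"
        by (simp add: exp_add[symmetric] algebra_simps)
      also have "\<dots> \<ge> 1" using Q[of "xs m"] d by (simp add: mult_nonneg_nonneg)
      finally have "1 \<le> exp (Q * \<delta>) * exp (- rate C (xs m) * \<delta>)" .
      from mult_left_mono[OF this B0] show ?thesis by (simp add: algebra_simps)
    qed
    moreover have h1: "emeasure M (evY \<delta> m xs F (\<lambda>_. \<delta>) UNIV) = ennreal (B * wt \<delta> xs F (\<lambda>_. \<delta>) m)"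
      unfolding B_def by (subst evY_formula) (use fF d jp_sum in auto)
    moreover have h2: "emeasure M (ev \<delta> m xs F (\<lambda>_. \<delta>)) = ennreal B"
      unfolding B_def emeasure_eq_measure by (subst ev_formula) (use fF d in auto)
    ultimately show ?thesis unfolding e1 e2 h1 h2 wm using B0
      by (simp add: ennreal_mult[symmetric] ennreal_le_iff)
  next
    case False
    have "?E1 \<inter> (fm \<delta> m m -` {v} \<inter> space M) = {}"
      using False card_pat[of m \<delta> _ b] unfolding v fm_pre by auto
    then show ?thesis by simp
  qed
qed auto


lemma count_sum:
  assumes d: "0 \<le> \<delta>" and Q: "\<And>x. rate C x \<le> Q"
  shows "(\<Sum>m. emeasure M {\<omega>\<in>space M. (\<forall>i<m. 0 < S i \<omega>) \<and> card {i. i<m \<and> \<delta> < S i \<omega>} = k})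
     \<le> ennreal (exp (Q * \<delta>))"
proof -
  define D where "D m = {\<omega>\<in>space M. (\<forall>i<Suc m. 0 < S i \<omega>)
          \<and> card {i. i<m \<and> \<delta> < S i \<omega>} = k \<and> \<delta> < S m \<omega>}" for m
  have Ds: "range D \<subseteq> sets M" unfolding D_def by auto
  have disj: "disjoint_family D"
    unfolding disjoint_family_on_def
  proof (intro ballI impI)
    fix m m' :: nat assume "m \<noteq> m'"
    have *: "D m \<inter> D m' = {}" if mm: "m < m'" for m m'
    proof (rule ccontr)
      assume "D m \<inter> D m' \<noteq> {}"
      then obtain \<omega> where a: "\<omega> \<in> D m" "\<omega> \<in> D m'" by blast
      have "insert m {i. i<m \<and> \<delta> < S i \<omega>} \<subseteq> {i. i<m' \<and> \<delta> < S i \<omega>}"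
        using a mm unfolding D_def by auto
      then have "card (insert m {i. i<m \<and> \<delta> < S i \<omega>}) \<le> card {i. i<m' \<and> \<delta> < S i \<omega>}"
        by (rule card_mono[rotated]) auto
      then show False using a unfolding D_def by simp
    qed
    show "D m \<inter> D m' = {}" using *[of m m'] *[of m' m] \<open>m \<noteq> m'\<close> by (cases "m < m'") auto
  qed
  have "(\<Sum>m. emeasure M {\<omega>\<in>space M. (\<forall>i<m. 0 < S i \<omega>) \<and> card {i. i<m \<and> \<delta> < S i \<omega>} = k})
     \<le> (\<Sum>m. ennreal (exp (Q * \<delta>)) * emeasure M (D m))"
    by (intro suminf_le summableI) (unfold D_def, rule succ_step[OF d Q])
  also have "\<dots> = ennreal (exp (Q * \<delta>)) * emeasure M (\<Union>m. D m)"
    by (simp add: suminf_emeasure[OF Ds disj])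
  also have "\<dots> \<le> ennreal (exp (Q * \<delta>)) * 1"
    by (intro mult_left_mono) (auto simp: emeasure_eq_measure)
  finally show ?thesis by simp
qed

lemma count_le_sum:
  assumes d: "0 \<le> \<delta>" and Q: "\<And>x. rate C x \<le> Q"
  shows "(\<Sum>m. emeasure M {\<omega>\<in>space M. (\<forall>i<m. 0 < S i \<omega>) \<and> card {i. i<m \<and> \<delta> < S i \<omega>} \<le> K})
     \<le> ennreal ((real K + 1) * exp (Q * \<delta>))"
proof -
  let ?u = "\<lambda>m k. emeasure M {\<omega>\<in>space M. (\<forall>i<m. 0 < S i \<omega>) \<and> card {i. i<m \<and> \<delta> < S i \<omega>} = k}"
  have "(\<Sum>m. emeasure M {\<omega>\<in>space M. (\<forall>i<m. 0 < S i \<omega>) \<and> card {i. i<m \<and> \<delta> < S i \<omega>} \<le> K})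
       \<le> (\<Sum>m. \<Sum>k\<le>K. ?u m k)"
  proof (intro suminf_le summableI)
    fix m
    have "{\<omega>\<in>space M. (\<forall>i<m. 0 < S i \<omega>) \<and> card {i. i<m \<and> \<delta> < S i \<omega>} \<le> K}
      = (\<Union>k\<in>{..K}. {\<omega>\<in>space M. (\<forall>i<m. 0 < S i \<omega>) \<and> card {i. i<m \<and> \<delta> < S i \<omega>} = k})" by auto
    then show "emeasure M {\<omega>\<in>space M. (\<forall>i<m. 0 < S i \<omega>) \<and> card {i. i<m \<and> \<delta> < S i \<omega>} \<le> K} \<le> (\<Sum>k\<le>K. ?u m k)"
      by (auto intro!: emeasure_subadditive_finite)
  qed
  also have "\<dots> = (\<Sum>k\<le>K. \<Sum>m. ?u m k)"
    by (rule suminf_sum) auto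
  also have "\<dots> \<le> (\<Sum>k\<le>K. ennreal (exp (Q * \<delta>)))"
    by (intro sum_mono count_sum[OF d Q])
  also have "\<dots> = ennreal ((real K + 1) * exp (Q * \<delta>))"
    by (simp add: ennreal_mult' ennreal_of_nat_eq_real_of_nat add.commute)
  finally show ?thesis .
qed


lemma ennreal_suminf_Suc_le: "(\<Sum>n. f (Suc n)) \<le> (\<Sum>n. (f n :: ennreal))"
proof -
  have "f sums ((\<Sum>n. f (Suc n)) + f 0)" by (rule sums_Suc) (rule summable_sums[OF summableI])
  then have "(\<Sum>n. f n) = (\<Sum>n. f (Suc n)) + f 0" by (rule sums_unique[symmetric])
  then show ?thesis by simp
qed

lemma far_total:
  assumes d: "0 \<le> \<delta>" and Q: "\<And>x. rate C x \<le> Q"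
    and far: "\<And>x. (\<integral>\<^sup>+ y. ennreal (jump_prob C x y) \<partial>count_space {y. R \<le> norm (lat y - lat x)}) \<le> c"
  shows "emeasure M (\<Union>n. {\<omega>\<in>space M. (\<forall>i<Suc n. 0 < S i \<omega>) \<and> R \<le> norm (lat (J (Suc n) \<omega>) - lat (J n \<omega>))
            \<and> card {i. i<Suc n \<and> \<delta> < S i \<omega>} \<le> K})
      \<le> c * ennreal ((real K + 1) * exp (Q * \<delta>))"
proof -
  let ?E2 = "\<lambda>m. emeasure M {\<omega>\<in>space M. (\<forall>i<m. 0 < S i \<omega>) \<and> card {i. i<m \<and> \<delta> < S i \<omega>} \<le> K}"
  have "emeasure M (\<Union>n. {\<omega>\<in>space M. (\<forall>i<Suc n. 0 < S i \<omega>) \<and> R \<le> norm (lat (J (Suc n) \<omega>) - lat (J n \<omega>))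
            \<and> card {i. i<Suc n \<and> \<delta> < S i \<omega>} \<le> K})
     \<le> (\<Sum>n. emeasure M {\<omega>\<in>space M. (\<forall>i<Suc n. 0 < S i \<omega>) \<and> R \<le> norm (lat (J (Suc n) \<omega>) - lat (J n \<omega>))
            \<and> card {i. i<Suc n \<and> \<delta> < S i \<omega>} \<le> K})"
    by (rule emeasure_subadditive_countably) auto
  also have "\<dots> \<le> (\<Sum>n. c * ?E2 (Suc n))"
    by (intro suminf_le summableI far_step[OF d far])
  also have "\<dots> = c * (\<Sum>n. ?E2 (Suc n))" by simp
  also have "\<dots> \<le> c * (\<Sum>n. ?E2 n)"
    by (intro mult_left_mono ennreal_suminf_Suc_le) simp
  also have "\<dots> \<le> c * ennreal ((real K + 1) * exp (Q * \<delta>))"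
    by (intro mult_left_mono count_le_sum[OF d Q]) simp
  finally show ?thesis .
qed

end

theorem lemma4p4:
  fixes \<alpha> \<kappa>1 \<kappa>2 \<gamma> :: real and N0 :: nat
  assumes "0 < \<alpha>" "\<alpha> < 2" "0 < \<kappa>1" "0 < \<kappa>2" "0 < \<gamma>"
  shows "\<exists>\<Theta>1 c. 1 \<le> \<Theta>1 \<and> 0 < c \<and>
    (\<forall>C :: int^'d \<Rightarrow> int^'d \<Rightarrow> real.
       condA1 C \<and> condA2 \<alpha> \<kappa>1 C \<and> condA3 \<alpha> N0 \<kappa>2 C \<and>
       (\<forall>(x0 :: int^'d) r (M' :: 'w measure) J' S'. 1 \<le> r \<longrightarrow> is_ctmc M' C x0 J' S' \<longrightarrow>
          measure M' {\<omega> \<in> space M'.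
             first_exit (lball 1 (lat x0) r) (\<lambda>u. pos_rho 1 \<alpha> J' S' u \<omega>) < \<gamma> * r powr \<alpha>} \<le> 1 / 2)
       \<longrightarrow>
       (\<forall>\<rho> r s t (z :: int^'d) (M :: 'w measure) J S.
          1 \<le> \<rho> \<and> 2 * r < s \<and> \<Theta>1 / \<rho> < 2 * r \<and> 0 \<le> t \<and> is_ctmc M C z J S \<longrightarrow>
          (let x = (1 / \<rho>) *\<^sub>R lat z;
               W = (\<lambda>\<omega> u. (t + u, pos_rho \<rho> \<alpha> J S u \<omega>))
           in measure M {\<omega> \<in> space M.
                 W \<omega> (first_exit (Qbox \<gamma> \<alpha> \<rho> t x r) (W \<omega>)) \<notin> Qbox \<gamma> \<alpha> \<rho> t x s}
              \<le> c * r powr \<alpha> / s powr \<alpha>)))"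
proof -
  note \<alpha> = assms(1) and k1 = assms(3) and k2p = assms(4) and \<gamma> = assms(5)
  define Q0 where "Q0 = \<kappa>1 * Kc CARD('d) \<alpha>"
  define k2 where "k2 = k2l \<kappa>2 \<alpha> TYPE('d)"
  define \<Theta> where "\<Theta> = 2 * max 1 ((1 / (\<gamma> * Q0)) powr (1 / \<alpha>))"
  define c where "c = 2 * exp 1 * 2 powr \<alpha> * Q0 * Q0 * \<gamma> / k2"
  have Q0: "0 < Q0" unfolding Q0_def using Kc_pos[OF \<alpha>, of "CARD('d)"] k1 by simp
  have k2: "0 < k2" unfolding k2_def by (rule k2l_pos[OF k2p])
  have \<Theta>1: "1 \<le> \<Theta>" unfolding \<Theta>_def by simp
  have c0: "0 < c" unfolding c_def using Q0 k2 \<gamma> by simp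
  show ?thesis
  proof (rule exI[of _ \<Theta>], rule exI[of _ c], intro conjI allI impI \<Theta>1 c0)
    fix C :: "int^'d \<Rightarrow> int^'d \<Rightarrow> real"
    assume HC: "condA1 C \<and> condA2 \<alpha> \<kappa>1 C \<and> condA3 \<alpha> N0 \<kappa>2 C \<and>
       (\<forall>(x0 :: int^'d) r (M' :: 'w measure) J' S'. 1 \<le> r \<longrightarrow> is_ctmc M' C x0 J' S' \<longrightarrow>
          measure M' {\<omega> \<in> space M'.
             first_exit (lball 1 (lat x0) r) (\<lambda>u. pos_rho 1 \<alpha> J' S' u \<omega>) < \<gamma> * r powr \<alpha>} \<le> 1 / 2)"
    then have A1: "condA1 C" and A2: "condA2 \<alpha> \<kappa>1 C" and A3: "condA3 \<alpha> N0 \<kappa>2 C" by auto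
    fix \<rho> r s t :: real and z :: "int^'d" and M :: "'w measure" and J S
    assume H: "1 \<le> \<rho> \<and> 2 * r < s \<and> \<Theta> / \<rho> < 2 * r \<and> 0 \<le> t \<and> is_ctmc M C z J S"
    then have \<rho>: "1 \<le> \<rho>" and rs: "2 * r < s" and \<Theta>r: "\<Theta> / \<rho> < 2 * r" and ctmc: "is_ctmc M C z J S"
      by auto
    interpret chainC M C z J S
    proof (unfold_locales)
      show "is_ctmc M C z J S" by (rule ctmc)
    qed (use jp_facts[OF A1 A2 A3 \<alpha> k1 k2p] in auto)
    have \<Theta>0: "0 < \<Theta> / \<rho>" using \<Theta>1 \<rho> by simp
    have r0: "0 < r" using \<Theta>0 \<Theta>r by simp
    have s0: "0 < s" using r0 rs by simp
    define \<delta> where "\<delta> = 1 / Q0"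
    have \<delta>: "0 < \<delta>" unfolding \<delta>_def using Q0 by simp
    define T where "T = \<rho> powr \<alpha> * (\<gamma> * r powr \<alpha>)"
    define K where "K = nat \<lfloor>T / \<delta>\<rfloor>"
    define R where "R = \<rho> * (s - r)"
    have R0: "0 < R" unfolding R_def using \<rho> rs r0 by simp
    define c0 where "c0 = Q0 * R powr (-\<alpha>) / k2"
    have farb: "(\<integral>\<^sup>+ y. ennreal (jump_prob C x y) \<partial>count_space {y. R \<le> norm (lat y - lat x)}) \<le> ennreal c0" for x
      using jp_facts(5)[OF A1 A2 A3 \<alpha> k1 k2p R0] unfolding c0_def Q0_def k2_def by simp
    have rQ: "rate C x \<le> Q0" for x using jp_facts(4)[OF A1 A2 A3 \<alpha> k1 k2p] unfolding Q0_def by simp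
    define E1 where "E1 n = {\<omega>\<in>space M. (\<forall>i<Suc n. 0 < S i \<omega>) \<and> R \<le> norm (lat (J (Suc n) \<omega>) - lat (J n \<omega>))
            \<and> card {i. i<Suc n \<and> \<delta> < S i \<omega>} \<le> K}" for n
    have U: "emeasure M (\<Union>n. E1 n) \<le> ennreal c0 * ennreal ((real K + 1) * exp (Q0 * \<delta>))"
      unfolding E1_def using far_total[OF less_imp_le[OF \<delta>] rQ farb] .
    have Us: "(\<Union>n. E1 n) \<in> sets M" unfolding E1_def by measurable
    define Ev where "Ev = {\<omega> \<in> space M.
                 (\<lambda>u. (t + u, pos_rho \<rho> \<alpha> J S u \<omega>)) (first_exit (Qbox \<gamma> \<alpha> \<rho> t ((1 / \<rho>) *\<^sub>R lat z) r) (\<lambda>u. (t + u, pos_rho \<rho> \<alpha> J S u \<omega>)))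
                    \<notin> Qbox \<gamma> \<alpha> \<rho> t ((1 / \<rho>) *\<^sub>R lat z) s}"
    have AEsub: "AE \<omega> in M. \<omega> \<in> Ev \<longrightarrow> \<omega> \<in> (\<Union>n. E1 n)"
      using AE_pos AE_J0
    proof eventually_elim
      case (elim \<omega>)
      show ?case
      proof
        assume ev: "\<omega> \<in> Ev"
        have "\<exists>n. \<rho> * (s - r) \<le> norm (lat (J (Suc n) \<omega>) - lat (J n \<omega>)) \<and>
             jtime S (Suc n) \<omega> \<le> \<rho> powr \<alpha> * (\<gamma> * r powr \<alpha>)"
          by (rule pathwise[where z=z and t=t]) (use elim \<rho> \<gamma> r0 rs \<alpha> ev in \<open>auto simp: Ev_def\<close>)
        then obtain n where n1: "R \<le> norm (lat (J (Suc n) \<omega>) - lat (J n \<omega>))"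
            and n2: "jtime S (Suc n) \<omega> \<le> T" unfolding R_def T_def by blast
        have "card {i. i<Suc n \<and> \<delta> < S i \<omega>} \<le> K"
          unfolding K_def using card_bound[where S=S and \<omega>=\<omega>, OF _ \<delta> n2] elim by simp
        then have "\<omega> \<in> E1 n" unfolding E1_def using n1 elim ev unfolding Ev_def by auto
        then show "\<omega> \<in> (\<Union>n. E1 n)" by blast
      qed
    qed
    have mU: "measure M (\<Union>n. E1 n) \<le> c0 * ((real K + 1) * exp (Q0 * \<delta>))"
    proof -
      have c00: "0 \<le> c0" unfolding c0_def using Q0 k2 by simp
      have X0: "0 \<le> (real K + 1) * exp (Q0 * \<delta>)" by simp
      have "ennreal c0 * ennreal ((real K + 1) * exp (Q0 * \<delta>)) = ennreal (c0 * ((real K + 1) * exp (Q0 * \<delta>)))"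
        by (rule ennreal_mult[OF c00 X0, symmetric])
      then have "emeasure M (\<Union>n. E1 n) \<le> ennreal (c0 * ((real K + 1) * exp (Q0 * \<delta>)))"
        using U by simp
      moreover have "0 \<le> c0 * ((real K + 1) * exp (Q0 * \<delta>))" using c00 X0 by simp
      ultimately show ?thesis by (simp add: emeasure_eq_measure ennreal_le_iff)
    qed
    have mEv: "measure M Ev \<le> measure M (\<Union>n. E1 n)"
    proof (cases "Ev \<in> sets M")
      case True
      have "emeasure M Ev \<le> emeasure M (\<Union>n. E1 n)" by (rule emeasure_mono_AE[OF AEsub Us])
      then show ?thesis using True Us by (simp add: emeasure_eq_measure)
    next
      case False
      then show ?thesis by (simp add: measure_notin_sets)
    qed
    have TQ: "1 \<le> \<rho> powr \<alpha> * (\<gamma> * r powr \<alpha>) * Q0"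
    proof -
      define B where "B = (1 / (\<gamma> * Q0)) powr (1 / \<alpha>)"
      have gQ: "0 < \<gamma> * Q0" using \<gamma> Q0 by simp
      have "\<Theta> < 2 * r * \<rho>" using \<Theta>r \<rho> by (simp add: field_simps)
      then have "B < \<rho> * r" unfolding \<Theta>_def B_def by (simp add: algebra_simps)
      then have "B powr \<alpha> \<le> (\<rho> * r) powr \<alpha>" using \<alpha> unfolding B_def by (intro powr_mono2) auto
      moreover have "B powr \<alpha> = 1 / (\<gamma> * Q0)" unfolding B_def using \<alpha> gQ by (simp add: powr_powr)
      moreover have "(\<rho> * r) powr \<alpha> = \<rho> powr \<alpha> * r powr \<alpha>" using \<rho> r0 by (simp add: powr_mult)
      ultimately have "1 / (\<gamma> * Q0) \<le> \<rho> powr \<alpha> * r powr \<alpha>" by simp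
      then have "1 \<le> (\<rho> powr \<alpha> * r powr \<alpha>) * (\<gamma> * Q0)" using gQ by (simp add: field_simps)
      then show ?thesis by (simp add: algebra_simps)
    qed
    have fin: "c0 * ((real K + 1) * exp (Q0 * \<delta>)) \<le> c * r powr \<alpha> / s powr \<alpha>"
      using final_arith[OF \<alpha> \<gamma> Q0 k2 \<rho> r0 rs TQ]
      unfolding c0_def c_def K_def T_def \<delta>_def R_def by simp
    show "let x = (1 / \<rho>) *\<^sub>R lat z;
               W = (\<lambda>\<omega> u. (t + u, pos_rho \<rho> \<alpha> J S u \<omega>))
           in measure M {\<omega> \<in> space M.
                 W \<omega> (first_exit (Qbox \<gamma> \<alpha> \<rho> t x r) (W \<omega>)) \<notin> Qbox \<gamma> \<alpha> \<rho> t x s}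
              \<le> c * r powr \<alpha> / s powr \<alpha>"
      unfolding Let_def Ev_def[symmetric] using mEv mU fin by linarith
  qed
qed

end
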